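(* Let $A\in \mathbb{Z}^{m\times n}$ be a matrix of rank $r$ and $p$ a prime. The following are equivalent: (1) the columns of $A$ form a $p$-adic generating set for a subspace; (2) the rows of $A$ form a $p$-adic generating set for a subspace; (3) for all real vectors $x,y$, whenever $y^\top A$ and $Ax$ are integral, $y^\top Ax$ is a $p$-adic rational; (4) every elementary divisor of $A$ is a power of $p$; (5) the GCD of the subdeterminants of $A$ of order $r$ is a power of $p$; (6) there exists a matrix $B$ with $p$-adic entries such that $ABA=A$.
   Context: A $p$-adic rational is a number $a/p^k$ with $a,k\in\mathbb{Z}$, $k\ge0$; a vector or matrix is $p$-adic if all entries are $p$-adic rationals. A finite set $S$ of integral vectors is a $p$-adic generating set for a subspace if every integral vector in the linear hull of $S$ is a linear combination of the elements of $S$ with $p$-adic coefficients. The elementary divisors (invariant factors) of an integral matrix of rank $r$ are the nonzero diagonal entries $\delta_1\mid\delta_2\mid\cdots\mid\delta_r$ ($\delta_i\ge1$) of its Smith normal form. *)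

theory Defs
  imports Complex_Main "HOL-Computational_Algebra.Primes"
    "Jordan_Normal_Form.DL_Rank_Submatrix" "Jordan_Normal_Form.Determinant"
begin

definition padic_rat :: "nat \<Rightarrow> real \<Rightarrow> bool" where
  "padic_rat p x \<longleftrightarrow> (\<exists>(a::int) (k::nat). x = of_int a / (of_nat p) ^ k)"

definition integral_vec :: "real vec \<Rightarrow> bool" where
  "integral_vec z \<longleftrightarrow> (\<forall>j < dim_vec z. z $ j \<in> \<int>)"

definition lin_comb :: "nat \<Rightarrow> real vec list \<Rightarrow> (nat \<Rightarrow> real) \<Rightarrow> real vec" where
  "lin_comb d vs c = vec d (\<lambda>j. \<Sum>i<length vs. c i * (vs ! i) $ j)"

definition padic_generating :: "nat \<Rightarrow> nat \<Rightarrow> real vec list \<Rightarrow> bool" where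
  "padic_generating p d vs \<longleftrightarrow>
     (\<forall>z \<in> carrier_vec d. integral_vec z \<and> (\<exists>c. z = lin_comb d vs c) \<longrightarrow>
        (\<exists>c. (\<forall>i < length vs. padic_rat p (c i)) \<and> z = lin_comb d vs c))"

definition real_mat :: "int mat \<Rightarrow> real mat" where
  "real_mat A = map_mat real_of_int A"

definition int_rank :: "int mat \<Rightarrow> nat" where
  "int_rank A = vec_space.rank (dim_row A) (real_mat A)"

definition smith_nf_of :: "int mat \<Rightarrow> int mat \<Rightarrow> bool" where
  "smith_nf_of A D \<longleftrightarrow>
     (\<exists>P Q. P \<in> carrier_mat (dim_row A) (dim_row A) \<and> Q \<in> carrier_mat (dim_col A) (dim_col A)
        \<and> det P \<in> {1, -1} \<and> det Q \<in> {1, -1} \<and> D = P * A * Q)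
   \<and> (\<forall>i < dim_row A. \<forall>j < dim_col A. i \<noteq> j \<longrightarrow> D $$ (i, j) = 0)
   \<and> (\<exists>s \<le> min (dim_row A) (dim_col A).
        (\<forall>i < s. D $$ (i, i) > 0) \<and> (\<forall>i. s \<le> i \<and> i < min (dim_row A) (dim_col A) \<longrightarrow> D $$ (i, i) = 0)
        \<and> (\<forall>i. i + 1 < s \<longrightarrow> D $$ (i, i) dvd D $$ (i + 1, i + 1)))"

definition elementary_divisors :: "int mat \<Rightarrow> int list" where
  "elementary_divisors A =
     (let D = (SOME D. smith_nf_of A D)
      in filter (\<lambda>d. d \<noteq> 0) (map (\<lambda>i. D $$ (i, i)) [0..<min (dim_row A) (dim_col A)]))"

definition minors :: "int mat \<Rightarrow> nat \<Rightarrow> int set" where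
  "minors A k = {det (submatrix A I J) | I J. I \<subseteq> {0..<dim_row A} \<and> J \<subseteq> {0..<dim_col A}
                   \<and> card I = k \<and> card J = k}"

end

theory Submission
  imports Defs
begin


definition unimod :: "nat \<Rightarrow> int mat \<Rightarrow> bool" where
  "unimod n P \<longleftrightarrow> P \<in> carrier_mat n n \<and> det P \<in> {1,-1}"

lemma unimod_one: "unimod n (1\<^sub>m n)" by (simp add: unimod_def)

lemma unimod_mult: "unimod n P \<Longrightarrow> unimod n Q \<Longrightarrow> unimod n (P*Q)"
  unfolding unimod_def by (auto simp: det_mult)

lemma unimod_transpose: "unimod n P \<Longrightarrow> unimod n (P\<^sup>T)"
  unfolding unimod_def by (auto simp: det_transpose)

lemma unimod_swap: "k<n \<Longrightarrow> l<n \<Longrightarrow> unimod n (swaprows_mat n k l)"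
proof (cases "k = l")
  case True
  assume "k<n" "l<n"
  have "swaprows_mat n k l = 1\<^sub>m n" using True by (intro eq_matI) auto
  then show ?thesis by (metis unimod_one)
next
  case False
  assume "k<n" "l<n"
  then show ?thesis unfolding unimod_def using det_swaprows_mat[OF _ _ False] by auto
qed

lemma unimod_addrow: "k \<noteq> l \<Longrightarrow> unimod n (addrow_mat n a k l)"
  unfolding unimod_def using det_addrow_mat by auto

lemma unimod_multrow: "k<n \<Longrightarrow> unimod n (multrow_mat n k (-1))"
  unfolding unimod_def using det_multrow_mat by auto

definition eqv :: "nat \<Rightarrow> nat \<Rightarrow> int mat \<Rightarrow> int mat \<Rightarrow> bool" where
  "eqv m n A B \<longleftrightarrow> A \<in> carrier_mat m n \<and> (\<exists>P Q. unimod m P \<and> unimod n Q \<and> B = P * A * Q)"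

lemma eqv_refl: "A \<in> carrier_mat m n \<Longrightarrow> eqv m n A A"
  unfolding eqv_def using unimod_one by (metis left_mult_one_mat right_mult_one_mat carrier_matD)

lemma eqv_carrier: "eqv m n A B \<Longrightarrow> B \<in> carrier_mat m n"
  unfolding eqv_def unimod_def by auto

lemma eqv_trans: assumes "eqv m n A B" "eqv m n B C" shows "eqv m n A C"
proof -
  obtain P1 Q1 where 1: "unimod m P1" "unimod n Q1" "B = P1 * A * Q1" and A: "A \<in> carrier_mat m n"
    using assms(1) unfolding eqv_def by auto
  obtain P2 Q2 where 2: "unimod m P2" "unimod n Q2" "C = P2 * B * Q2"
    using assms(2) unfolding eqv_def by auto
  have c: "P1 \<in> carrier_mat m m" "P2 \<in> carrier_mat m m" "Q1 \<in> carrier_mat n n" "Q2 \<in> carrier_mat n n"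
    using 1 2 unfolding unimod_def by auto
  have X: "P1 * A \<in> carrier_mat m n" "P1 * A * Q1 \<in> carrier_mat m n" "Q1 * Q2 \<in> carrier_mat n n" using c A by auto
  have "C = P2 * (P1 * A * Q1) * Q2" using 2 1 by simp
  also have "\<dots> = P2 * ((P1 * A * Q1) * Q2)" by (rule assoc_mult_mat[OF c(2) X(2) c(4)])
  also have "(P1 * A * Q1) * Q2 = (P1 * A) * (Q1 * Q2)" by (rule assoc_mult_mat[OF X(1) c(3) c(4)])
  also have "P2 * ((P1 * A) * (Q1 * Q2)) = (P2 * (P1 * A)) * (Q1 * Q2)" by (rule assoc_mult_mat[OF c(2) X(1) X(3), symmetric])
  also have "P2 * (P1 * A) = (P2 * P1) * A" by (rule assoc_mult_mat[OF c(2) c(1) A, symmetric])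
  finally have "C = (P2 * P1) * A * (Q1 * Q2)" .
  then show ?thesis unfolding eqv_def using A 1 2 unimod_mult by blast
qed

lemma eqv_left: "A \<in> carrier_mat m n \<Longrightarrow> unimod m P \<Longrightarrow> eqv m n A (P*A)"
  unfolding eqv_def using unimod_one by (metis right_mult_one_mat mult_carrier_mat unimod_def)

lemma eqv_right: "A \<in> carrier_mat m n \<Longrightarrow> unimod n Q \<Longrightarrow> eqv m n A (A*Q)"
  unfolding eqv_def using unimod_one by (metis left_mult_one_mat carrier_matD)

lemma eqv_transpose: assumes "eqv m n A B" shows "eqv n m (A\<^sup>T) (B\<^sup>T)"
proof -
  obtain P Q where 1: "unimod m P" "unimod n Q" "B = P * A * Q" and A: "A \<in> carrier_mat m n"
    using assms unfolding eqv_def by auto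
  have c: "P \<in> carrier_mat m m" "Q \<in> carrier_mat n n" using 1 unfolding unimod_def by auto
  have "B\<^sup>T = Q\<^sup>T * A\<^sup>T * P\<^sup>T" unfolding 1 using c A
    by (simp add: transpose_mult[of _ m n _ n] transpose_mult[of _ m m _ n] assoc_mult_mat[of _ n m _ m])
  then show ?thesis unfolding eqv_def using A 1 unimod_transpose by auto
qed

lemma mult_entry: "A \<in> carrier_mat m k \<Longrightarrow> B \<in> carrier_mat k n \<Longrightarrow> i < m \<Longrightarrow> j < n \<Longrightarrow>
  (A*B)$$(i,j) = (\<Sum>l<k. A$$(i,l) * B$$(l,j))"
  by (simp add: scalar_prod_def atLeast0LessThan)

lemma col_smaller:
  assumes A: "A \<in> carrier_mat m n" and n: "0<n" and i: "i<m" and a: "A$$(0,0) \<noteq> 0"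
    and nd: "\<not> A$$(0,0) dvd A$$(i,0)"
  shows "\<exists>B. eqv m n A B \<and> B$$(0,0) \<noteq> 0 \<and> \<bar>B$$(0,0)\<bar> < \<bar>A$$(0,0)\<bar>"
proof -
  define a where "a = A$$(0,0)"
  define c where "c = - (A$$(i,0) div a)"
  have m0: "0 < m" using i by auto
  define B where "B = swaprows_mat m 0 i * (addrow_mat m c i 0 * A)"
  have X: "addrow_mat m c i 0 * A \<in> carrier_mat m n" by (rule mult_carrier_mat[OF addrow_mat_carrier A])
  have B: "B = swaprows 0 i (addrow c i 0 A)"
    unfolding B_def by (simp only: addrow_mat[OF A m0] swaprows_mat[OF X m0 i])
  have "B$$(0,0) = c * a + A$$(i,0)" using A i m0 n unfolding B a_def by simp
  also have "\<dots> = A$$(i,0) mod a" unfolding c_def by (simp add: minus_div_mult_eq_mod[symmetric])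
  finally have B00: "B$$(0,0) = A$$(i,0) mod a" .
  have "B$$(0,0) \<noteq> 0" using nd unfolding B00 a_def by (simp add: dvd_eq_mod_eq_0)
  moreover have "\<bar>B$$(0,0)\<bar> < \<bar>A$$(0,0)\<bar>" unfolding B00 a_def using a abs_mod_less by blast
  moreover have "eqv m n A B" unfolding B_def
    using eqv_trans[OF eqv_left[OF A unimod_addrow[of i 0 m c]] eqv_left[OF _ unimod_swap[OF m0 i]]]
      X i m0 nd by (metis dvd_refl gr0I)
  ultimately show ?thesis by blast
qed

lemma row_smaller:
  assumes A: "A \<in> carrier_mat m n" and m: "0<m" and j: "j<n" and a: "A$$(0,0) \<noteq> 0"
    and nd: "\<not> A$$(0,0) dvd A$$(0,j)"
  shows "\<exists>B. eqv m n A B \<and> B$$(0,0) \<noteq> 0 \<and> \<bar>B$$(0,0)\<bar> < \<bar>A$$(0,0)\<bar>"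
proof -
  have At: "A\<^sup>T \<in> carrier_mat n m" using A by auto
  have "A\<^sup>T $$ (0,0) = A $$ (0,0)" "A\<^sup>T $$ (j,0) = A $$ (0,j)" using A m j by auto
  then obtain B where B: "eqv n m (A\<^sup>T) B" "B$$(0,0) \<noteq> 0" "\<bar>B$$(0,0)\<bar> < \<bar>A$$(0,0)\<bar>"
    using col_smaller[OF At m j] a nd by auto
  have Bc: "B \<in> carrier_mat n m" using eqv_carrier[OF B(1)] .
  have "eqv m n A (B\<^sup>T)" using eqv_transpose[OF B(1)] by simp
  moreover have "B\<^sup>T $$ (0,0) = B $$ (0,0)" using Bc m j by auto
  ultimately show ?thesis using B by auto
qed

lemma mixed_smaller:
  assumes A: "A \<in> carrier_mat m n" and i: "i<m" and j: "j<n" and a: "A$$(0,0) \<noteq> 0"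
    and dc: "\<forall>i<m. A$$(0,0) dvd A$$(i,0)" and dr: "\<forall>j<n. A$$(0,0) dvd A$$(0,j)"
    and nd: "\<not> A$$(0,0) dvd A$$(i,j)"
  shows "\<exists>B. eqv m n A B \<and> B$$(0,0) \<noteq> 0 \<and> \<bar>B$$(0,0)\<bar> < \<bar>A$$(0,0)\<bar>"
proof -
  define a where "a = A$$(0,0)"
  define c where "c = - (A$$(i,0) div a)"
  have m0: "0 < m" using i by auto
  have i0: "i \<noteq> 0"
  proof
    assume "i = 0" then show False using nd dr j by auto
  qed
  define A2 where "A2 = addrow_mat m 1 0 i * (addrow_mat m c i 0 * A)"
  have X: "addrow_mat m c i 0 * A \<in> carrier_mat m n" by (rule mult_carrier_mat[OF addrow_mat_carrier A])
  have A2: "A2 = addrow 1 0 i (addrow c i 0 A)"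
    unfolding A2_def by (simp only: addrow_mat[OF A m0] addrow_mat[OF X i])
  have e: "A$$(i,0) = (A$$(i,0) div a) * a" using dc i unfolding a_def by simp
  have "A2$$(0,0) = (c * a + A$$(i,0)) + a" using A i m0 j i0 unfolding A2 a_def by simp
  also have "\<dots> = a" unfolding c_def using e by (simp add: algebra_simps)
  finally have A200: "A2$$(0,0) = A$$(0,0)" unfolding a_def .
  have "A2$$(0,j) = (c * A$$(0,j) + A$$(i,j)) + A$$(0,j)" using A i m0 j i0 unfolding A2 by simp
  hence nd2: "\<not> A2$$(0,0) dvd A2$$(0,j)" unfolding A200 using nd dr j
    by (metis dvd_add_left_iff dvd_add_right_iff dvd_mult)
  have eq: "eqv m n A A2" unfolding A2_def
    using eqv_trans[OF eqv_left[OF A unimod_addrow[of i 0 m c]] eqv_left[OF _ unimod_addrow[of 0 i m 1]]]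
      X i m0 i0 by auto
  have A2c: "A2 \<in> carrier_mat m n" using eqv_carrier[OF eq] .
  obtain B where "eqv m n A2 B" "B$$(0,0) \<noteq> 0" "\<bar>B$$(0,0)\<bar> < \<bar>A2$$(0,0)\<bar>"
    using row_smaller[OF A2c m0 j] nd2 A200 a by auto
  then show ?thesis using eqv_trans[OF eq] A200 by auto
qed

lemma smaller:
  assumes A: "A \<in> carrier_mat m n" and i: "i<m" and j: "j<n" and a: "A$$(0,0) \<noteq> 0"
    and nd: "\<not> A$$(0,0) dvd A$$(i,j)"
  shows "\<exists>B. eqv m n A B \<and> B$$(0,0) \<noteq> 0 \<and> \<bar>B$$(0,0)\<bar> < \<bar>A$$(0,0)\<bar>"
proof (cases "\<forall>i<m. A$$(0,0) dvd A$$(i,0)")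
  case False
  then obtain i' where "i' < m" "\<not> A$$(0,0) dvd A$$(i',0)" by auto
  then show ?thesis using col_smaller[OF A _ _ a] j by auto
next
  case True
  show ?thesis
  proof (cases "\<forall>j<n. A$$(0,0) dvd A$$(0,j)")
    case False
    then obtain j' where "j' < n" "\<not> A$$(0,0) dvd A$$(0,j')" by auto
    then show ?thesis using row_smaller[OF A _ _ a] i by auto
  next
    case True2: True
    show ?thesis using mixed_smaller[OF A i j a True True2 nd] .
  qed
qed

lemma reduce:
  "A \<in> carrier_mat m n \<Longrightarrow> A$$(0,0) \<noteq> 0 \<Longrightarrow>
   \<exists>B. eqv m n A B \<and> B$$(0,0) \<noteq> 0 \<and> (\<forall>i<m. \<forall>j<n. B$$(0,0) dvd B$$(i,j))"
proof (induction "nat \<bar>A$$(0,0)\<bar>" arbitrary: A rule: less_induct)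
  case less
  show ?case
  proof (cases "\<forall>i<m. \<forall>j<n. A$$(0,0) dvd A$$(i,j)")
    case True then show ?thesis using eqv_refl[OF less.prems(1)] less.prems by blast
  next
    case False
    then obtain i j where ij: "i<m" "j<n" "\<not> A$$(0,0) dvd A$$(i,j)" by auto
    obtain B where B: "eqv m n A B" "B$$(0,0) \<noteq> 0" "\<bar>B$$(0,0)\<bar> < \<bar>A$$(0,0)\<bar>"
      using smaller[OF less.prems(1) ij(1,2) less.prems(2) ij(3)] by auto
    have "nat \<bar>B$$(0,0)\<bar> < nat \<bar>A$$(0,0)\<bar>" using B by simp
    from less.hyps[OF this eqv_carrier[OF B(1)] B(2)] obtain C where
      "eqv m n B C" "C$$(0,0) \<noteq> 0" "\<forall>i<m. \<forall>j<n. C$$(0,0) dvd C$$(i,j)" by auto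
    then show ?thesis using eqv_trans[OF B(1)] by blast
  qed
qed

lemma clear_col:
  assumes B: "B \<in> carrier_mat m n" and b: "B$$(0,0) \<noteq> 0" and m0: "0<m" and n: "0<n"
    and dv: "\<forall>i<m. \<forall>j<n. B$$(0,0) dvd B$$(i,j)"
  shows "\<exists>C. eqv m n B C \<and> (\<forall>j<n. C$$(0,j) = B$$(0,j)) \<and> (\<forall>i. 0<i \<longrightarrow> i<m \<longrightarrow> C$$(i,0) = 0)
     \<and> (\<forall>i<m. \<forall>j<n. B$$(0,0) dvd C$$(i,j))"
proof -
  define b where "b = B$$(0,0)"
  define L where "L = mat m m (\<lambda>(i,k). if k = i then 1 else if k = 0 then - (B$$(i,0) div b) else (0::int))"
  have Lc: "L \<in> carrier_mat m m" unfolding L_def by simp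
  have "det L = prod_list (diag_mat L)"
    by (rule det_lower_triangular[OF _ Lc], auto simp: L_def)
  also have "diag_mat L = map (\<lambda>i. 1) [0..<m]" unfolding diag_mat_def using Lc
    by (intro map_cong) (auto simp: L_def)
  also have "prod_list (map (\<lambda>i. 1::int) [0..<m]) = 1" by (simp add: map_replicate_const)
  finally have "unimod m L" using Lc unfolding unimod_def by simp
  hence eq: "eqv m n B (L * B)" using eqv_left[OF B] by auto
  have entry: "(L*B)$$(i,j) = B$$(i,j) + (if i = 0 then 0 else - (B$$(i,0) div b) * B$$(0,j))"
    if ij: "i<m" "j<n" for i j
  proof -
    have "(L*B)$$(i,j) = (\<Sum>l<m. L$$(i,l) * B$$(l,j))" using mult_entry[OF Lc B ij] .
    also have "\<dots> = (\<Sum>l<m. (if l = i then B$$(l,j) else 0) + (if l = 0 \<and> i \<noteq> 0 then - (B$$(i,0) div b) * B$$(0,j) else 0))"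
      by (rule sum.cong, auto simp: L_def ij)
    also have "\<dots> = B$$(i,j) + (if i = 0 then 0 else - (B$$(i,0) div b) * B$$(0,j))"
      using ij by (simp add: sum.distrib)
    finally show ?thesis .
  qed
  have "\<forall>j<n. (L*B)$$(0,j) = B$$(0,j)" using entry[OF m0] by simp
  moreover have "\<forall>i. 0<i \<longrightarrow> i<m \<longrightarrow> (L*B)$$(i,0) = 0"
  proof (intro allI impI)
    fix i assume i: "0<i" "i<m"
    have "b dvd B$$(i,0)" using dv i n unfolding b_def by auto
    then show "(L*B)$$(i,0) = 0" using entry[OF i(2) n] i by (auto simp: b_def)
  qed
  moreover have "\<forall>i<m. \<forall>j<n. B$$(0,0) dvd (L*B)$$(i,j)"
    using entry dv by (auto simp: b_def)
  ultimately show ?thesis using eq by blast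
qed

lemma unimod_multrow': "k<n \<Longrightarrow> a \<in> {1,-1} \<Longrightarrow> unimod n (multrow_mat n k a)"
  unfolding unimod_def using det_multrow_mat by auto

lemma clear_both:
  assumes B: "B \<in> carrier_mat m n" and b: "B$$(0,0) \<noteq> 0" and m0: "0<m" and n0: "0<n"
    and dv: "\<forall>i<m. \<forall>j<n. B$$(0,0) dvd B$$(i,j)"
  shows "\<exists>C. eqv m n B C \<and> C$$(0,0) > 0 \<and> (\<forall>i. 0<i \<longrightarrow> i<m \<longrightarrow> C$$(i,0) = 0)
     \<and> (\<forall>j. 0<j \<longrightarrow> j<n \<longrightarrow> C$$(0,j) = 0) \<and> (\<forall>i<m. \<forall>j<n. C$$(0,0) dvd C$$(i,j))"
proof -
  obtain C1 where C1: "eqv m n B C1" "\<forall>j<n. C1$$(0,j) = B$$(0,j)" "\<forall>i. 0<i \<longrightarrow> i<m \<longrightarrow> C1$$(i,0) = 0"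
    "\<forall>i<m. \<forall>j<n. B$$(0,0) dvd C1$$(i,j)"
    using clear_col[OF B b m0 n0 dv] by blast
  have C1c: "C1 \<in> carrier_mat m n" using eqv_carrier[OF C1(1)] .
  have T: "C1\<^sup>T \<in> carrier_mat n m" using C1c by auto
  have T00: "C1\<^sup>T $$ (0,0) = B$$(0,0)" using C1 C1c m0 n0 by auto
  have Tdv: "\<forall>i<n. \<forall>j<m. C1\<^sup>T$$(0,0) dvd C1\<^sup>T$$(i,j)" using C1(4) C1c T00 by auto
  obtain C2 where C2: "eqv n m (C1\<^sup>T) C2" "\<forall>j<m. C2$$(0,j) = C1\<^sup>T$$(0,j)"
    "\<forall>i. 0<i \<longrightarrow> i<n \<longrightarrow> C2$$(i,0) = 0" "\<forall>i<n. \<forall>j<m. C1\<^sup>T$$(0,0) dvd C2$$(i,j)"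
    using clear_col[OF T _ n0 m0 Tdv] T00 b by auto
  have C2c: "C2 \<in> carrier_mat n m" using eqv_carrier[OF C2(1)] .
  define C3 where "C3 = C2\<^sup>T"
  have "eqv m n C1 C3" using eqv_transpose[OF C2(1)] by (simp add: C3_def)
  hence e3: "eqv m n B C3" using eqv_trans[OF C1(1)] by blast
  have C3c: "C3 \<in> carrier_mat m n" using C2c by (simp add: C3_def)
  have C300: "C3$$(0,0) = B$$(0,0)" using C2 C2c m0 n0 T00 by (simp add: C3_def)
  have C3r: "\<forall>i. 0<i \<longrightarrow> i<m \<longrightarrow> C3$$(i,0) = 0" using C2 C2c C1 C1c m0 n0 by (simp add: C3_def)
  have C3c0: "\<forall>j. 0<j \<longrightarrow> j<n \<longrightarrow> C3$$(0,j) = 0" using C2 C2c m0 n0 by (simp add: C3_def)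
  have C3d: "\<forall>i<m. \<forall>j<n. B$$(0,0) dvd C3$$(i,j)" using C2(4) C2c T00 by (simp add: C3_def)
  define s where "s = sgn (B$$(0,0))"
  have s: "s \<in> {1,-1}" using b by (auto simp: s_def sgn_if)
  define C where "C = multrow_mat m 0 s * C3"
  have C: "C = multrow 0 s C3" unfolding C_def using multrow_mat[OF C3c] by simp
  have e: "eqv m n B C" unfolding C_def using eqv_trans[OF e3 eqv_left[OF C3c unimod_multrow'[OF m0 s]]] .
  have C00: "C$$(0,0) = \<bar>B$$(0,0)\<bar>" unfolding C using C3c m0 n0 C300 by (simp add: s_def abs_sgn)
  have "C$$(0,0) > 0" unfolding C00 using b by simp
  moreover have "\<forall>i. 0<i \<longrightarrow> i<m \<longrightarrow> C$$(i,0) = 0" unfolding C using C3c C3r n0 by simp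
  moreover have "\<forall>j. 0<j \<longrightarrow> j<n \<longrightarrow> C$$(0,j) = 0" unfolding C using C3c C3c0 m0 by simp
  moreover have "\<forall>i<m. \<forall>j<n. C$$(0,0) dvd C$$(i,j)" unfolding C00 unfolding C using C3c C3d by simp
  ultimately show ?thesis using e by blast
qed

definition snf_props :: "nat \<Rightarrow> nat \<Rightarrow> int mat \<Rightarrow> bool" where
 "snf_props m n D \<longleftrightarrow> (\<forall>i<m. \<forall>j<n. i \<noteq> j \<longrightarrow> D$$(i,j) = 0) \<and>
   (\<exists>s \<le> min m n. (\<forall>i<s. D$$(i,i) > 0) \<and> (\<forall>i. s \<le> i \<and> i < min m n \<longrightarrow> D$$(i,i) = 0)
        \<and> (\<forall>i. i + 1 < s \<longrightarrow> D$$(i,i) dvd D$$(i+1,i+1)))"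

lemma dvd_mult_entries_left:
  fixes c :: int
  assumes "P \<in> carrier_mat m m'" "X \<in> carrier_mat m' n" "\<forall>i<m'. \<forall>j<n. c dvd X$$(i,j)"
  shows "\<forall>i<m. \<forall>j<n. c dvd (P*X)$$(i,j)"
proof (intro allI impI)
  fix i j assume ij: "i<m" "j<n"
  show "c dvd (P*X)$$(i,j)" unfolding mult_entry[OF assms(1,2) ij]
    by (rule dvd_sum, rule dvd_mult, insert assms(3) ij, auto)
qed

lemma dvd_mult_entries_right:
  fixes c :: int
  assumes "X \<in> carrier_mat m n'" "Q \<in> carrier_mat n' n" "\<forall>i<m. \<forall>j<n'. c dvd X$$(i,j)"
  shows "\<forall>i<m. \<forall>j<n. c dvd (X*Q)$$(i,j)"
proof (intro allI impI)
  fix i j assume ij: "i<m" "j<n"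
  show "c dvd (X*Q)$$(i,j)" unfolding mult_entry[OF assms(1,2) ij]
    by (rule dvd_sum, rule dvd_mult2, insert assms(3) ij, auto)
qed

lemma swap_corner:
  assumes A: "A \<in> carrier_mat m n" and i0: "i0 < m" and j0: "j0 < n"
  shows "(swaprows_mat m 0 i0 * A * swaprows_mat n 0 j0)$$(0,0) = A$$(i0,j0)"
proof -
  have m0: "0 < m" and n0: "0 < n" using i0 j0 by auto
  have X: "swaprows_mat m 0 i0 * A \<in> carrier_mat m n" by (rule mult_carrier_mat[OF swaprows_mat_carrier A])
  have XX: "swaprows_mat m 0 i0 * A = swaprows 0 i0 A" using swaprows_mat[OF A m0 i0] by simp
  have "(swaprows_mat m 0 i0 * A * swaprows_mat n 0 j0)$$(0,0) =
     (\<Sum>l<n. (swaprows_mat m 0 i0 * A)$$(0,l) * swaprows_mat n 0 j0 $$ (l,0))"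
    by (rule mult_entry[OF X swaprows_mat_carrier m0 n0])
  also have "\<dots> = (\<Sum>l<n. if l = j0 then (swaprows_mat m 0 i0 * A)$$(0,l) else 0)"
    by (rule sum.cong, auto simp: n0)
  also have "\<dots> = A$$(i0,j0)" using j0 A i0 m0 unfolding XX by simp
  finally show ?thesis .
qed

lemma snf_exists: "A \<in> carrier_mat m n \<Longrightarrow> \<exists>D. eqv m n A D \<and> snf_props m n D"
proof (induction m arbitrary: n A)
  case 0
  then show ?case using eqv_refl by (auto simp: snf_props_def)
next
  case (Suc m)
  note A = Suc.prems
  show ?case
  proof (cases "\<exists>i<Suc m. \<exists>j<n. A$$(i,j) \<noteq> 0")
    case False
    then have "snf_props (Suc m) n A" unfolding snf_props_def by (auto intro!: exI[of _ 0])
    then show ?thesis using eqv_refl[OF A] by blast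
  next
    case True
    then obtain i0 j0 where ij: "i0 < Suc m" "j0 < n" "A$$(i0,j0) \<noteq> 0" by auto
    then obtain n' where n: "n = Suc n'" by (cases n) auto
    define A1 where "A1 = swaprows_mat (Suc m) 0 i0 * A * swaprows_mat n 0 j0"
    have e1: "eqv (Suc m) n A A1" unfolding A1_def eqv_def
      using A unimod_swap[of 0 "Suc m" i0] unimod_swap[of 0 n j0] ij by blast
    have A100: "A1$$(0,0) \<noteq> 0" unfolding A1_def using swap_corner[OF A ij(1,2)] ij(3) by simp
    obtain B where B: "eqv (Suc m) n A1 B" "B$$(0,0) \<noteq> 0" "\<forall>i<Suc m. \<forall>j<n. B$$(0,0) dvd B$$(i,j)"
      using reduce[OF eqv_carrier[OF e1] A100] by auto
    obtain C where C: "eqv (Suc m) n B C" "C$$(0,0) > 0" "\<forall>i. 0<i \<longrightarrow> i<Suc m \<longrightarrow> C$$(i,0) = 0"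
     "\<forall>j. 0<j \<longrightarrow> j<n \<longrightarrow> C$$(0,j) = 0" "\<forall>i<Suc m. \<forall>j<n. C$$(0,0) dvd C$$(i,j)"
      using clear_both[OF eqv_carrier[OF B(1)] B(2) _ _ B(3)] n by auto
    have eC: "eqv (Suc m) n A C" using eqv_trans[OF eqv_trans[OF e1 B(1)] C(1)] .
    have Cc: "C \<in> carrier_mat (Suc m) (Suc n')" using eqv_carrier[OF eC] n by simp
    define c where "c = C$$(0,0)"
    define C4 where "C4 = mat m n' (\<lambda>(i,j). C$$(i+1,j+1))"
    have C4c: "C4 \<in> carrier_mat m n'" unfolding C4_def by simp
    obtain D' where D': "eqv m n' C4 D'" "snf_props m n' D'" using Suc.IH[OF C4c] by auto
    obtain P' Q' where PQ': "unimod m P'" "unimod n' Q'" "D' = P' * C4 * Q'"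
      using D'(1) unfolding eqv_def by auto
    have Pc: "P' \<in> carrier_mat m m" and Qc: "Q' \<in> carrier_mat n' n'" using PQ' unfolding unimod_def by auto
    define C1m where "C1m = mat 1 1 (\<lambda>_. c)"
    have C1c: "C1m \<in> carrier_mat 1 1" unfolding C1m_def by simp
    have Cblock: "C = four_block_mat C1m (0\<^sub>m 1 n') (0\<^sub>m m 1) C4"
      by (rule eq_matI, insert Cc C(3,4), auto simp: C1m_def C4_def c_def n)
    define P'' where "P'' = four_block_mat (1\<^sub>m 1) (0\<^sub>m 1 m) (0\<^sub>m m 1) P'"
    define Q'' where "Q'' = four_block_mat (1\<^sub>m 1) (0\<^sub>m 1 n') (0\<^sub>m n' 1) Q'"
    have P''c: "P'' \<in> carrier_mat (Suc m) (Suc m)" unfolding P''_def using Pc by auto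
    have Q''c: "Q'' \<in> carrier_mat n n" unfolding Q''_def using Qc n by auto
    have "det P'' = det (1\<^sub>m 1) * det P'" unfolding P''_def
      by (rule det_four_block_mat_upper_right_zero[OF one_carrier_mat refl zero_carrier_mat Pc])
    hence uP: "unimod (Suc m) P''" using PQ'(1) P''c unfolding unimod_def by simp
    have "det Q'' = det (1\<^sub>m 1) * det Q'" unfolding Q''_def
      by (rule det_four_block_mat_upper_right_zero[OF one_carrier_mat refl zero_carrier_mat Qc])
    hence uQ: "unimod n Q''" using PQ'(2) Q''c unfolding unimod_def by simp
    define D where "D = P'' * C * Q''"
    have "eqv (Suc m) n C D" using uP uQ Cc n unfolding eqv_def D_def by auto
    hence eD: "eqv (Suc m) n A D" using eqv_trans[OF eC] by blast
    have PC: "P'' * C = four_block_mat C1m (0\<^sub>m 1 n') (0\<^sub>m m 1) (P' * C4)"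
      unfolding P''_def Cblock
      by (subst mult_four_block_mat[of _ 1 1 _ m _ m _ _ 1 _ n'],
          insert C1c C4c Pc, auto)
    have Dblock: "D = four_block_mat C1m (0\<^sub>m 1 n') (0\<^sub>m m 1) D'"
      unfolding D_def PC PQ'(3) Q''_def
      by (subst mult_four_block_mat[of _ 1 1 _ n' _ m _ _ 1 _ n'],
          insert C1c C4c Pc Qc, auto)
    have Dij: "D$$(i,j) = (if i = 0 \<and> j = 0 then c else if i = 0 \<or> j = 0 then 0 else D'$$(i-1,j-1))"
      if "i < Suc m" "j < Suc n'" for i j
      using that C1c eqv_carrier[OF D'(1)] unfolding Dblock by (auto simp: C1m_def)
    obtain s' where s': "s' \<le> min m n'" "\<forall>i<s'. D'$$(i,i) > 0" "\<forall>i. s' \<le> i \<and> i < min m n' \<longrightarrow> D'$$(i,i) = 0"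
      "\<forall>i. i + 1 < s' \<longrightarrow> D'$$(i,i) dvd D'$$(i+1,i+1)" and D'off: "\<forall>i<m. \<forall>j<n'. i \<noteq> j \<longrightarrow> D'$$(i,j) = 0"
      using D'(2) unfolding snf_props_def by blast
    have cdv: "\<forall>i<m. \<forall>j<n'. c dvd D'$$(i,j)"
    proof -
      have "\<forall>i<m. \<forall>j<n'. c dvd C4$$(i,j)" using C(5) unfolding C4_def c_def n by auto
      hence "\<forall>i<m. \<forall>j<n'. c dvd (P' * C4)$$(i,j)" using dvd_mult_entries_left[OF Pc C4c] by blast
      thus ?thesis unfolding PQ'(3) using dvd_mult_entries_right[OF _ Qc, of "P' * C4" m] Pc C4c by auto
    qed
    have "snf_props (Suc m) n D" unfolding snf_props_def
    proof (intro conjI)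
      show "\<forall>i<Suc m. \<forall>j<n. i \<noteq> j \<longrightarrow> D $$ (i, j) = 0"
        using Dij D'off n by auto
      show "\<exists>s\<le>min (Suc m) n. (\<forall>i<s. 0 < D $$ (i, i)) \<and> (\<forall>i. s \<le> i \<and> i < min (Suc m) n \<longrightarrow> D $$ (i, i) = 0)
        \<and> (\<forall>i. i + 1 < s \<longrightarrow> D $$ (i, i) dvd D $$ (i + 1, i + 1))"
      proof (intro exI[of _ "Suc s'"] conjI allI impI)
        show "Suc s' \<le> min (Suc m) n" using s'(1) n by simp
        fix i
        { assume i: "i < Suc s'"
          show "0 < D$$(i,i)"
          proof (cases i)
            case 0 then show ?thesis using Dij[of 0 0] C(2) c_def by simp
          next
            case (Suc k) then show ?thesis using Dij[of i i] s' i by auto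
          qed }
        { assume i: "Suc s' \<le> i \<and> i < min (Suc m) n"
          then obtain k where k: "i = Suc k" by (cases i) auto
          show "D$$(i,i) = 0" using Dij[of i i] s'(3) i k n by auto }
        { assume i: "i + 1 < Suc s'"
          show "D$$(i,i) dvd D$$(i+1,i+1)"
          proof (cases i)
            case 0 then show ?thesis using Dij[of 0 0] Dij[of 1 1] cdv s'(1) i n by auto
          next
            case (Suc k) then show ?thesis using Dij[of i i] Dij[of "i+1" "i+1"] s' i n by auto
          qed }
      qed
    qed
    then show ?thesis using eD by blast
  qed
qed

lemma smith_exists: assumes "A \<in> carrier_mat m n" shows "\<exists>D. smith_nf_of A D"
proof -
  obtain D where "eqv m n A D" "snf_props m n D" using snf_exists[OF assms] by auto
  then show ?thesis unfolding smith_nf_of_def eqv_def snf_props_def unimod_def using assms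
    by (intro exI[of _ D]) auto
qed



lemma card_lt_set: "finite I \<Longrightarrow> I \<subseteq> {0..<k} \<Longrightarrow> {i. i < k \<and> i \<in> I} = I" by auto

lemma submatrix_mult:
  assumes X: "X \<in> carrier_mat k m" and A: "A \<in> carrier_mat m n"
  shows "submatrix (X*A) I J = submatrix X I UNIV * submatrix A UNIV J"
proof (rule eq_matI)
  have d1: "dim_col (submatrix X I UNIV) = m" using X by (simp add: dim_submatrix)
  have d2: "dim_row (submatrix A UNIV J) = m" using A by (simp add: dim_submatrix)
  show "dim_row (submatrix (X*A) I J) = dim_row (submatrix X I UNIV * submatrix A UNIV J)"
    using X A by (simp add: dim_submatrix)
  show "dim_col (submatrix (X*A) I J) = dim_col (submatrix X I UNIV * submatrix A UNIV J)"
    using X A by (simp add: dim_submatrix)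
  fix i j assume i: "i < dim_row (submatrix X I UNIV * submatrix A UNIV J)"
    and j: "j < dim_col (submatrix X I UNIV * submatrix A UNIV J)"
  have i': "i < card {i. i < k \<and> i \<in> I}" using i X by (simp add: dim_submatrix)
  have j': "j < card {j. j < n \<and> j \<in> J}" using j A by (simp add: dim_submatrix)
  have c1: "submatrix X I UNIV \<in> carrier_mat (card {i. i < k \<and> i \<in> I}) m"
    using X by (intro carrier_matI) (auto simp: dim_submatrix)
  have c2: "submatrix A UNIV J \<in> carrier_mat m (card {j. j < n \<and> j \<in> J})"
    using A by (intro carrier_matI) (auto simp: dim_submatrix)
  have pi: "pick I i < k" using pick_le[OF i'] .
  have pj: "pick J j < n" using pick_le[OF j'] .
  have "submatrix (X*A) I J $$ (i,j) = (X*A)$$(pick I i, pick J j)"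
    using i' j' X A by (simp add: submatrix_index)
  also have "\<dots> = (\<Sum>l<m. X$$(pick I i, l) * A$$(l, pick J j))" using mult_entry[OF X A pi pj] .
  also have "\<dots> = (\<Sum>l<m. submatrix X I UNIV $$ (i,l) * submatrix A UNIV J $$ (l,j))"
  proof (rule sum.cong[OF refl])
    fix l assume l: "l \<in> {..<m}"
    have cU: "card {j. j < dim_col X \<and> j \<in> UNIV} = m" "card {j. j < dim_row A \<and> j \<in> UNIV} = m" using X A by auto
    have "submatrix X I UNIV $$ (i,l) = X$$(pick I i, pick UNIV l)"
      by (rule submatrix_index, insert i' l X cU, auto)
    moreover have "submatrix A UNIV J $$ (l,j) = A$$(pick UNIV l, pick J j)"
      by (rule submatrix_index, insert j' l A cU, auto)
    ultimately show "X$$(pick I i, l) * A$$(l, pick J j) = submatrix X I UNIV $$ (i,l) * submatrix A UNIV J $$ (l,j)"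
      by (simp add: pick_UNIV)
  qed
  also have "\<dots> = (submatrix X I UNIV * submatrix A UNIV J) $$ (i,j)"
    by (rule mult_entry[OF c1 c2 i' j', symmetric])
  finally show "submatrix (X*A) I J $$ (i,j) = (submatrix X I UNIV * submatrix A UNIV J) $$ (i,j)" .
qed

lemma rows_det_dvd:
  fixes N :: "int mat"
  assumes N: "N \<in> carrier_mat m r"
    and d: "\<forall>K. K \<subseteq> {0..<m} \<longrightarrow> card K = r \<longrightarrow> d dvd det (submatrix N K UNIV)"
    and f: "\<forall>i<r. f i < m"
  shows "d dvd det (mat\<^sub>r r r (\<lambda>i. row N (f i)))"
proof (cases "inj_on f {0..<r}")
  case False
  then obtain i j where ij: "i<r" "j<r" "i\<noteq>j" "f i = f j" unfolding inj_on_def by auto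
  have "det (mat\<^sub>r r r (\<lambda>i. row N (f i))) = 0"
    by (rule det_identical_rows[OF _ ij(3) ij(1) ij(2)], insert ij N, auto)
  then show ?thesis by simp
next
  case True
  define K where "K = f ` {0..<r}"
  have K: "K \<subseteq> {0..<m}" "card K = r" using f True by (auto simp: K_def card_image)
  have fK: "finite K" unfolding K_def by simp
  define \<sigma> where "\<sigma> i = (if i < r then card {a\<in>K. a < f i} else i)" for i
  have pk: "pick K (\<sigma> i) = f i" if "i<r" for i
    using pick_card_in_set[of "f i" K] that by (auto simp: \<sigma>_def K_def)
  have sr: "\<sigma> i < r" if i: "i<r" for i
  proof -
    have "{a\<in>K. a < f i} \<subset> K" using i by (auto simp: K_def)
    then have "card {a\<in>K. a < f i} < card K" using fK by (simp add: psubset_card_mono)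
    then show ?thesis using i K by (simp add: \<sigma>_def)
  qed
  have inj: "inj_on \<sigma> {0..<r}"
  proof (rule inj_onI)
    fix x y assume "x \<in> {0..<r}" "y \<in> {0..<r}" "\<sigma> x = \<sigma> y"
    then have "f x = f y" using pk by (metis atLeastLessThan_iff)
    then show "x = y" using True \<open>x \<in> {0..<r}\<close> \<open>y \<in> {0..<r}\<close> by (auto dest: inj_onD)
  qed
  have img: "\<sigma> ` {0..<r} = {0..<r}"
    by (rule endo_inj_surj, insert sr inj, auto)
  have perm: "\<sigma> permutes {0..<r}"
    by (rule bij_imp_permutes, unfold bij_betw_def, insert inj img, auto simp: \<sigma>_def)
  have cK: "card {i. i < m \<and> i \<in> K} = r" using K by (metis (no_types, lifting) Collect_cong atLeastLessThan_iff subsetD zero_le mem_Collect_eq subset_eq Collect_mem_eq)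
  have S: "submatrix N K UNIV \<in> carrier_mat r r"
    using N cK by (intro carrier_matI) (auto simp: dim_submatrix)
  have eq: "mat\<^sub>r r r (\<lambda>i. row N (f i)) = mat r r (\<lambda>(i,j). submatrix N K UNIV $$ (\<sigma> i, j))"
  proof (rule eq_matI)
    fix i j assume i: "i < dim_row (mat r r (\<lambda>(i,j). submatrix N K UNIV $$ (\<sigma> i, j)))"
      and j: "j < dim_col (mat r r (\<lambda>(i,j). submatrix N K UNIV $$ (\<sigma> i, j)))"
    have i': "i < r" and j': "j < r" using i j by auto
    have "submatrix N K UNIV $$ (\<sigma> i, j) = N $$ (pick K (\<sigma> i), pick UNIV j)"
      by (rule submatrix_index, insert N cK sr[OF i'] j', auto)
    then show "mat\<^sub>r r r (\<lambda>i. row N (f i)) $$ (i, j) = mat r r (\<lambda>(i,j). submatrix N K UNIV $$ (\<sigma> i, j)) $$ (i, j)"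
      using i' j' N f pk[OF i'] by (simp add: pick_UNIV)
  qed auto
  have "det (mat\<^sub>r r r (\<lambda>i. row N (f i))) = signof \<sigma> * det (submatrix N K UNIV)"
    unfolding eq by (rule det_permute_rows[OF S perm])
  then show ?thesis using d K by simp
qed

lemma minors_mult_left_dvd:
  fixes X A :: "int mat"
  assumes X: "X \<in> carrier_mat k m" and A: "A \<in> carrier_mat m n"
    and d: "\<forall>x \<in> minors A r. d dvd x" and y: "y \<in> minors (X*A) r"
  shows "d dvd y"
proof -
  obtain I J where IJ: "y = det (submatrix (X*A) I J)" "I \<subseteq> {0..<k}" "J \<subseteq> {0..<n}" "card I = r" "card J = r"
    using y X A unfolding minors_def by auto
  define M where "M = submatrix X I UNIV"
  define N where "N = submatrix A UNIV J"
  have cI: "card {i. i < k \<and> i \<in> I} = r" using IJ by (metis (no_types, lifting) Collect_cong atLeastLessThan_iff subsetD zero_le mem_Collect_eq subset_eq Collect_mem_eq)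
  have cJ: "card {i. i < n \<and> i \<in> J} = r" using IJ by (metis (no_types, lifting) Collect_cong atLeastLessThan_iff subsetD zero_le mem_Collect_eq subset_eq Collect_mem_eq)
  have M: "M \<in> carrier_mat r m" unfolding M_def using X cI by (intro carrier_matI) (auto simp: dim_submatrix)
  have N: "N \<in> carrier_mat m r" unfolding N_def using A cJ by (intro carrier_matI) (auto simp: dim_submatrix)
  have y: "y = det (M * N)" unfolding IJ(1) M_def N_def using submatrix_mult[OF X A] by simp
  have dN: "\<forall>K. K \<subseteq> {0..<m} \<longrightarrow> card K = r \<longrightarrow> d dvd det (submatrix N K UNIV)"
  proof (intro allI impI)
    fix K assume K: "K \<subseteq> {0..<m}" "card K = r"
    have "submatrix N K UNIV = submatrix A K J" unfolding N_def using submatrix_split by metis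
    moreover have "det (submatrix A K J) \<in> minors A r" unfolding minors_def using A K IJ by auto
    ultimately show "d dvd det (submatrix N K UNIV)" using d by simp
  qed
  let ?F = "{f. (\<forall>i\<in>{0..<r}. f i \<in> {0..<m}) \<and> (\<forall>i. i \<notin> {0..<r} \<longrightarrow> f i = i)}"
  have "det (M * N) = (\<Sum>f\<in>?F. det (mat\<^sub>r r r (\<lambda>i. M$$(i, f i) \<cdot>\<^sub>v row N (f i))))"
    unfolding mat_mul_finsum_alt[OF M N]
    by (rule det_linear_rows_sum, insert N, auto)
  also have "\<dots> = (\<Sum>f\<in>?F. prod (\<lambda>i. M$$(i, f i)) {0..<r} * det (mat\<^sub>r r r (\<lambda>i. row N (f i))))"
    by (rule sum.cong[OF refl], rule det_rows_mul, insert N, auto)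
  finally have e: "y = (\<Sum>f\<in>?F. prod (\<lambda>i. M$$(i, f i)) {0..<r} * det (mat\<^sub>r r r (\<lambda>i. row N (f i))))"
    using y by simp
  show ?thesis unfolding e
    by (rule dvd_sum, rule dvd_mult, rule rows_det_dvd[OF N dN], auto)
qed



lemma card_sub_range: "I \<subseteq> {0..<k} \<Longrightarrow> card {i. i < k \<and> i \<in> I} = card I"
  by (metis (no_types, lifting) Collect_cong atLeastLessThan_iff subsetD zero_le mem_Collect_eq subset_eq Collect_mem_eq)

lemma submatrix_transpose: "submatrix (A\<^sup>T) I J = (submatrix A J I)\<^sup>T"
proof (rule eq_matI)
  show "dim_row (submatrix A\<^sup>T I J) = dim_row (submatrix A J I)\<^sup>T" by (simp add: dim_submatrix)
  show "dim_col (submatrix A\<^sup>T I J) = dim_col (submatrix A J I)\<^sup>T" by (simp add: dim_submatrix)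
  fix i j assume i: "i < dim_row (submatrix A J I)\<^sup>T" and j: "j < dim_col (submatrix A J I)\<^sup>T"
  have i': "i < card {a. a < dim_col A \<and> a \<in> I}" and j': "j < card {a. a < dim_row A \<and> a \<in> J}"
    using i j by (simp_all add: dim_submatrix)
  have "submatrix A\<^sup>T I J $$ (i, j) = A\<^sup>T $$ (pick I i, pick J j)"
    by (rule submatrix_index, insert i' j', auto)
  also have "\<dots> = A $$ (pick J j, pick I i)" using pick_le[OF i'] pick_le[OF j'] by simp
  also have "\<dots> = submatrix A J I $$ (j, i)" by (rule submatrix_index[symmetric], insert i' j', auto)
  also have "\<dots> = (submatrix A J I)\<^sup>T $$ (i, j)" using i j by simp
  finally show "submatrix A\<^sup>T I J $$ (i, j) = (submatrix A J I)\<^sup>T $$ (i, j)" .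
qed

lemma minors_transpose: "minors (A\<^sup>T) r = minors A r"
proof -
  have e: "det (submatrix (A\<^sup>T) I J) = det (submatrix A J I)"
    if "I \<subseteq> {0..<dim_col A}" "J \<subseteq> {0..<dim_row A}" "card I = r" "card J = r" for I J
  proof -
    have "submatrix A J I \<in> carrier_mat r r" using that
      by (intro carrier_matI) (auto simp: dim_submatrix card_sub_range)
    then show ?thesis unfolding submatrix_transpose by (rule det_transpose)
  qed
  show ?thesis
  proof
    show "minors A\<^sup>T r \<subseteq> minors A r"
    proof
      fix x assume "x \<in> minors A\<^sup>T r"
      then obtain I J where "x = det (submatrix (A\<^sup>T) I J)" "I \<subseteq> {0..<dim_col A}" "J \<subseteq> {0..<dim_row A}" "card I = r" "card J = r"
        unfolding minors_def by auto
      then show "x \<in> minors A r" using e unfolding minors_def by auto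
    qed
    show "minors A r \<subseteq> minors A\<^sup>T r"
    proof
      fix x assume "x \<in> minors A r"
      then obtain I J where "x = det (submatrix A J I)" "I \<subseteq> {0..<dim_col A}" "J \<subseteq> {0..<dim_row A}" "card I = r" "card J = r"
        unfolding minors_def by auto
      then have "x = det (submatrix (A\<^sup>T) I J)" using e[of I J] by simp
      then show "x \<in> minors A\<^sup>T r" unfolding minors_def
        by (intro CollectI exI[of _ I] exI[of _ J]) (use \<open>I \<subseteq> _\<close> \<open>J \<subseteq> _\<close> \<open>card I = r\<close> \<open>card J = r\<close> in auto)
    qed
  qed
qed

lemma minors_mult_right_dvd:
  fixes Y A :: "int mat"
  assumes A: "A \<in> carrier_mat m n" and Y: "Y \<in> carrier_mat n l"
    and d: "\<forall>x \<in> minors A r. d dvd x" and y: "y \<in> minors (A*Y) r"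
  shows "d dvd y"
proof -
  have "(A*Y)\<^sup>T = Y\<^sup>T * A\<^sup>T" using transpose_mult[OF A Y] .
  then have "y \<in> minors (Y\<^sup>T * A\<^sup>T) r" using y minors_transpose[of "A*Y" r] by simp
  moreover have "\<forall>x \<in> minors (A\<^sup>T) r. d dvd x" using d minors_transpose[of A r] by simp
  moreover have Yt: "Y\<^sup>T \<in> carrier_mat l n" and At: "A\<^sup>T \<in> carrier_mat n m" using A Y by auto
  ultimately show ?thesis using minors_mult_left_dvd[OF Yt At] by blast
qed

lemma minors_mult_both_dvd:
  fixes X Y A :: "int mat"
  assumes X: "X \<in> carrier_mat k m" and A: "A \<in> carrier_mat m n" and Y: "Y \<in> carrier_mat n l"
    and d: "\<forall>x \<in> minors A r. d dvd x"
  shows "\<forall>y \<in> minors (X*A*Y) r. d dvd y"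
proof -
  have "\<forall>x \<in> minors (X*A) r. d dvd x" using minors_mult_left_dvd[OF X A d] by blast
  moreover have XA: "X*A \<in> carrier_mat k n" using X A by auto
  ultimately show ?thesis using minors_mult_right_dvd[OF XA Y] by blast
qed

lemma assoc5:
  assumes c: "P1 \<in> carrier_mat m m" "P2 \<in> carrier_mat m m" "Q1 \<in> carrier_mat n n" "Q2 \<in> carrier_mat n n"
    and A: "A \<in> carrier_mat m n"
  shows "P2 * (P1 * A * Q1) * Q2 = (P2 * P1) * A * (Q1 * Q2)"
proof -
  have X: "P1 * A \<in> carrier_mat m n" "P1 * A * Q1 \<in> carrier_mat m n" "Q1 * Q2 \<in> carrier_mat n n" using c A by auto
  have "P2 * (P1 * A * Q1) * Q2 = P2 * ((P1 * A * Q1) * Q2)" by (rule assoc_mult_mat[OF c(2) X(2) c(4)])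
  also have "(P1 * A * Q1) * Q2 = (P1 * A) * (Q1 * Q2)" by (rule assoc_mult_mat[OF X(1) c(3) c(4)])
  also have "P2 * ((P1 * A) * (Q1 * Q2)) = (P2 * (P1 * A)) * (Q1 * Q2)" by (rule assoc_mult_mat[OF c(2) X(1) X(3), symmetric])
  also have "P2 * (P1 * A) = (P2 * P1) * A" by (rule assoc_mult_mat[OF c(2) c(1) A, symmetric])
  finally show ?thesis .
qed

lemma unimod_inv:
  assumes "unimod n P"
  shows "\<exists>P'. unimod n P' \<and> P' * P = 1\<^sub>m n \<and> P * P' = 1\<^sub>m n"
proof -
  have P: "P \<in> carrier_mat n n" and dP: "det P \<in> {1,-1}" using assms unfolding unimod_def by auto
  define P' where "P' = det P \<cdot>\<^sub>m adj_mat P"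
  have aP: "adj_mat P \<in> carrier_mat n n" using adj_mat[OF P] by simp
  have P'c: "P' \<in> carrier_mat n n" unfolding P'_def using aP by simp
  have dd: "det P * det P = 1" using dP by auto
  have "P' * P = det P \<cdot>\<^sub>m (adj_mat P * P)" unfolding P'_def using mult_smult_assoc_mat[OF aP P] .
  also have "\<dots> = 1\<^sub>m n" unfolding adj_mat(3)[OF P] by (rule eq_matI, auto simp: dd)
  finally have 1: "P' * P = 1\<^sub>m n" .
  have "P * P' = det P \<cdot>\<^sub>m (P * adj_mat P)" unfolding P'_def using mult_smult_distrib[OF P aP] .
  also have "\<dots> = 1\<^sub>m n" unfolding adj_mat(2)[OF P] by (rule eq_matI, auto simp: dd)
  finally have 2: "P * P' = 1\<^sub>m n" .
  have "det P' * det P = 1" using det_mult[OF P'c P] 1 by simp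
  then have "det P' \<in> {1,-1}" using dP by auto
  then show ?thesis using 1 2 P'c unfolding unimod_def by auto
qed

lemma eqv_inverse:
  assumes "eqv m n A D"
  shows "\<exists>P Q P' Q'. unimod m P \<and> unimod n Q \<and> unimod m P' \<and> unimod n Q' \<and> D = P * A * Q \<and> A = P' * D * Q'
     \<and> P' * P = 1\<^sub>m m \<and> P * P' = 1\<^sub>m m \<and> Q * Q' = 1\<^sub>m n \<and> Q' * Q = 1\<^sub>m n"
proof -
  obtain P Q where PQ: "unimod m P" "unimod n Q" "D = P * A * Q" and A: "A \<in> carrier_mat m n"
    using assms unfolding eqv_def by auto
  obtain P' where P': "unimod m P'" "P' * P = 1\<^sub>m m" "P * P' = 1\<^sub>m m" using unimod_inv[OF PQ(1)] by auto
  obtain Q' where Q': "unimod n Q'" "Q' * Q = 1\<^sub>m n" "Q * Q' = 1\<^sub>m n" using unimod_inv[OF PQ(2)] by auto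
  have "P' * D * Q' = (P' * P) * A * (Q * Q')" unfolding PQ(3)
    by (rule assoc5, insert PQ P' Q' A, auto simp: unimod_def)
  also have "\<dots> = A" using P' Q' A by simp
  finally show ?thesis using PQ P' Q' by blast
qed

lemma eqv_symm: "eqv m n A D \<Longrightarrow> eqv m n D A"
  using eqv_inverse[of m n A D] eqv_carrier[of m n A D] unfolding eqv_def by blast

lemma gcd_minors_dvd: assumes "eqv m n A D" shows "Gcd (minors A r) dvd Gcd (minors D r)"
proof -
  obtain P Q where PQ: "unimod m P" "unimod n Q" "D = P * A * Q" and A: "A \<in> carrier_mat m n"
    using assms unfolding eqv_def by auto
  have "\<forall>x \<in> minors A r. Gcd (minors A r) dvd x" by (simp add: Gcd_dvd)
  then have "\<forall>y \<in> minors D r. Gcd (minors A r) dvd y" unfolding PQ(3)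
    by (rule minors_mult_both_dvd[rotated 3], insert PQ A, auto simp: unimod_def)
  then show ?thesis by (simp add: Gcd_greatest)
qed

lemma gcd_minors_eqv: "eqv m n A D \<Longrightarrow> Gcd (minors A r) = Gcd (minors D r)"
  using gcd_minors_dvd[of m n A D r] gcd_minors_dvd[of m n D A r] eqv_symm[of m n A D]
  by (simp add: zdvd_antisym_nonneg Gcd_int_greater_eq_0)

definition diagp :: "nat \<Rightarrow> nat \<Rightarrow> nat \<Rightarrow> int mat \<Rightarrow> bool" where
 "diagp m n s D \<longleftrightarrow> D \<in> carrier_mat m n \<and> (\<forall>i<m. \<forall>j<n. i \<noteq> j \<longrightarrow> D$$(i,j) = 0) \<and> s \<le> min m n
    \<and> (\<forall>i<s. D$$(i,i) > 0) \<and> (\<forall>i. s \<le> i \<and> i < min m n \<longrightarrow> D$$(i,i) = 0)"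

lemma pick_initial: "i < s \<Longrightarrow> pick {0..<s} i = i"
proof (induction i)
  case 0 then show ?case by (auto intro!: Least_equality)
next
  case (Suc i) then show ?case by (auto intro!: Least_equality)
qed

lemma prod_list_upt: "prod_list (map f [0..<s]) = prod f {0..<s}" by (induct s) auto

lemma diag_minor_gcd:
  assumes D: "diagp m n s D"
  shows "Gcd (minors D s) = (\<Prod>i<s. D$$(i,i))"
proof -
  have Dc: "D \<in> carrier_mat m n" and off: "\<forall>i<m. \<forall>j<n. i \<noteq> j \<longrightarrow> D$$(i,j) = 0"
    and sm: "s \<le> min m n" and pos: "\<forall>i<s. D$$(i,i) > 0" and zer: "\<forall>i. s \<le> i \<and> i < min m n \<longrightarrow> D$$(i,i) = 0"
    using D unfolding diagp_def by auto
  let ?p = "\<Prod>i<s. D$$(i,i)"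
  have mem: "?p \<in> minors D s"
  proof -
    let ?S = "submatrix D {0..<s} {0..<s}"
    have cs1: "card {i. i < m \<and> i \<in> {0..<s}} = s" using sm by (subst card_sub_range) auto
    have cs2: "card {i. i < n \<and> i \<in> {0..<s}} = s" using sm by (subst card_sub_range) auto
    have S: "?S \<in> carrier_mat s s" using Dc cs1 cs2 by (intro carrier_matI) (auto simp: dim_submatrix)
    have Sij: "?S$$(i,j) = D$$(i,j)" if "i<s" "j<s" for i j
      using submatrix_index[of i D "{0..<s}" j "{0..<s}"] that Dc cs1 cs2 by (simp add: pick_initial)
    have "det ?S = prod_list (diag_mat ?S)"
      by (rule det_upper_triangular[OF _ S], unfold upper_triangular_def, insert S Sij off sm, auto)
    also have "diag_mat ?S = map (\<lambda>i. D$$(i,i)) [0..<s]" unfolding diag_mat_def using S Sij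
      by (intro map_cong) auto
    also have "prod_list (map (\<lambda>i. D$$(i,i)) [0..<s]) = ?p" by (simp add: prod_list_upt lessThan_atLeast0)
    finally have "det ?S = ?p" .
    then show ?thesis unfolding minors_def using Dc sm
      by (intro CollectI exI[of _ "{0..<s}"]) auto
  qed
  have dv: "?p dvd x" if x: "x \<in> minors D s" for x
  proof -
    obtain I J where x: "x = det (submatrix D I J)" "I \<subseteq> {0..<m}" "J \<subseteq> {0..<n}" "card I = s" "card J = s"
      using x Dc unfolding minors_def by auto
    let ?S = "submatrix D I J"
    have cI: "card {i. i < m \<and> i \<in> I} = s" using x card_sub_range by metis
    have cJ: "card {i. i < n \<and> i \<in> J} = s" using x card_sub_range by metis
    have S: "?S \<in> carrier_mat s s" using Dc cI cJ by (intro carrier_matI) (auto simp: dim_submatrix)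
    have Sij: "?S$$(a,b) = D$$(pick I a, pick J b)" "pick I a < m" "pick J b < n" if "a<s" "b<s" for a b
      using submatrix_index[of a D I b J] that Dc cI cJ pick_le[of a m I] pick_le[of b n J] by auto
    have detS: "det ?S = (\<Sum>p\<in>{p. p permutes {0..<s}}. signof p * (\<Prod>a = 0..<s. ?S$$(a, p a)))"
      by (rule det_def'[OF S])
    show "?p dvd x"
    proof (cases "I \<subseteq> {0..<s}")
      case True
      have I: "I = {0..<s}" by (rule card_subset_eq, insert True x, auto)
      have ent: "D$$(a,a) dvd ?S$$(a,b)" if ab: "a<s" "b<s" for a b
      proof -
        have "?S$$(a,b) = D$$(a, pick J b)" using Sij[OF ab] I pick_initial[OF ab(1)] by simp
        moreover have "pick J b \<noteq> a \<Longrightarrow> D$$(a, pick J b) = 0" using off Sij[OF ab] ab sm by auto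
        ultimately show ?thesis by (cases "pick J b = a") auto
      qed
      have "?p dvd signof p * (\<Prod>a = 0..<s. ?S$$(a, p a))" if p: "p permutes {0..<s}" for p
      proof -
        have "(\<Prod>a = 0..<s. D$$(a,a)) dvd (\<Prod>a = 0..<s. ?S$$(a, p a))"
          by (rule prod_dvd_prod, rule ent, insert permutes_in_image[OF p], auto)
        then show ?thesis by (simp add: lessThan_atLeast0)
      qed
      then show ?thesis unfolding x(1) detS by (intro dvd_sum) auto
    next
      case False
      then obtain i where i0: "i \<in> I" "i \<notin> {0..<s}" by blast
      then have i: "i \<in> I" "\<not> i < s" by auto
      have fI: "finite I" using x(2) finite_subset by auto
      define a where "a = card {y\<in>I. y < i}"
      have "{y\<in>I. y < i} \<subset> I" using i by auto
      then have a: "a < s" unfolding a_def using psubset_card_mono[OF fI] x(4) by auto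
      have pa: "pick I a = i" unfolding a_def by (rule pick_card_in_set[OF i(1)])
      have zero: "?S$$(a,b) = 0" if b: "b<s" for b
      proof -
        have "?S$$(a,b) = D$$(i, pick J b)" "i < m" "pick J b < n" using Sij[OF a b] pa by auto
        then show ?thesis using off zer i by (cases "pick J b = i") auto
      qed
      have "det ?S = 0" unfolding detS
      proof (rule sum.neutral, intro ballI)
        fix p assume "p \<in> {p. p permutes {0..<s}}"
        then have "p a < s" using permutes_in_image a by fastforce
        then have "(\<Prod>a = 0..<s. ?S$$(a, p a)) = 0" using a zero by (intro prod_zero bexI[of _ a]) auto
        then show "signof p * (\<Prod>a = 0..<s. ?S$$(a, p a)) = 0" by simp
      qed
      then show ?thesis using x(1) by simp
    qed
  qed
  have "?p \<ge> 0" using pos by (intro prod_nonneg) (auto simp: less_imp_le)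
  then show ?thesis using Gcd_dvd[OF mem] Gcd_greatest[of "minors D s" ?p] dv
    by (intro zdvd_antisym_nonneg) (auto simp: Gcd_int_greater_eq_0)
qed

lemma rank_sum_le:
  fixes f g :: "nat \<Rightarrow> nat \<Rightarrow> real"
  shows "vec_space.rank m (mat m n (\<lambda>(r,c). \<Sum>i<t. f i r * g i c)) \<le> t"
proof (induction t)
  case 0
  have z: "mat m n (\<lambda>(r,c). \<Sum>i<(0::nat). f i r * g i c) = 0\<^sub>m m n" by (rule eq_matI) auto
  show ?case unfolding z vec_space.rank_0I by simp
next
  case (Suc t)
  have e: "mat m n (\<lambda>(r,c). \<Sum>i<Suc t. f i r * g i c) =
     mat m n (\<lambda>(r,c). \<Sum>i<t. f i r * g i c) + mat m n (\<lambda>(r,c). f t r * g t c)" by (rule eq_matI) auto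
  have "vec_space.rank m (mat m n (\<lambda>(r,c). f t r * g t c)) \<le> 1"
    by (rule vec_space.rank_le_1_product_entries[of _ m n "f t" "g t"]) auto
  moreover have "vec_space.rank m (mat m n (\<lambda>(r,c). \<Sum>i<Suc t. f i r * g i c)) \<le>
     vec_space.rank m (mat m n (\<lambda>(r,c). \<Sum>i<t. f i r * g i c)) + vec_space.rank m (mat m n (\<lambda>(r,c). f t r * g t c))"
    unfolding e by (rule vec_space.rank_subadditive) auto
  ultimately show ?case using Suc.IH by simp
qed

lemma real_mat_carrier: "A \<in> carrier_mat m n \<Longrightarrow> real_mat A \<in> carrier_mat m n"
  unfolding real_mat_def by simp

lemma real_mat_index: "i < dim_row A \<Longrightarrow> j < dim_col A \<Longrightarrow> real_mat A $$ (i,j) = real_of_int (A$$(i,j))"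
  unfolding real_mat_def by simp

lemma submatrix_real: "submatrix (real_mat A) I J = real_mat (submatrix A I J)"
  by (rule eq_matI, auto simp: real_mat_def dim_submatrix submatrix_index pick_le)

lemma det_real_mat: "det (real_mat A) = real_of_int (det A)"
  unfolding real_mat_def by (rule of_int_hom.hom_det)

lemma diag_factor:
  assumes D: "diagp m n s D" and P: "P \<in> carrier_mat m m" and Q: "Q \<in> carrier_mat n n"
    and r: "r < m" and c: "c < n"
  shows "(P * D * Q)$$(r,c) = (\<Sum>i<s. P$$(r,i) * D$$(i,i) * Q$$(i,c))"
proof -
  have Dc: "D \<in> carrier_mat m n" and off: "\<forall>i<m. \<forall>j<n. i \<noteq> j \<longrightarrow> D$$(i,j) = 0"
    and sm: "s \<le> min m n" and zer: "\<forall>i. s \<le> i \<and> i < min m n \<longrightarrow> D$$(i,i) = 0"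
    using D unfolding diagp_def by auto
  have PD: "P * D \<in> carrier_mat m n" using P Dc by simp
  have pd: "(P * D)$$(r,k) = (if k < s then P$$(r,k) * D$$(k,k) else 0)" if k: "k < n" for k
  proof -
    have "(P * D)$$(r,k) = (\<Sum>i<m. P$$(r,i) * D$$(i,k))" by (rule mult_entry[OF P Dc r k])
    also have "\<dots> = (\<Sum>i<m. if i = k then P$$(r,k) * D$$(k,k) else 0)"
      by (rule sum.cong, insert off k, auto)
    also have "\<dots> = (if k < m then P$$(r,k) * D$$(k,k) else 0)" by simp
    also have "\<dots> = (if k < s then P$$(r,k) * D$$(k,k) else 0)" using zer sm k by auto
    finally show ?thesis .
  qed
  have "(P * D * Q)$$(r,c) = (\<Sum>k<n. (P * D)$$(r,k) * Q$$(k,c))" by (rule mult_entry[OF PD Q r c])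
  also have "\<dots> = (\<Sum>k<n. if k < s then P$$(r,k) * D$$(k,k) * Q$$(k,c) else 0)"
    by (rule sum.cong, auto simp: pd)
  also have "\<dots> = (\<Sum>k\<in>{..<n} \<inter> {k. k < s}. P$$(r,k) * D$$(k,k) * Q$$(k,c))"
    by (simp add: sum.inter_restrict)
  also have "{..<n} \<inter> {k. k < s} = {..<s}" using sm by auto
  finally show ?thesis .
qed

lemma rank_eqv:
  assumes e: "eqv m n A D" and D: "diagp m n s D"
  shows "int_rank A = s"
proof -
  have A: "A \<in> carrier_mat m n" using e unfolding eqv_def by auto
  have pos: "\<forall>i<s. D$$(i,i) > 0" using D unfolding diagp_def by auto
  have "Gcd (minors A s) = (\<Prod>i<s. D$$(i,i))" using gcd_minors_eqv[OF e] diag_minor_gcd[OF D] by simp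
  also have "\<dots> \<noteq> 0" using pos by (auto simp: prod_zero_iff)
  finally have "\<not> minors A s \<subseteq> {0}" using Gcd_0_iff by blast
  then obtain I J where IJ: "det (submatrix A I J) \<noteq> 0" "J \<subseteq> {0..<n}" "card J = s"
    unfolding minors_def using A by auto
  have "det (submatrix (real_mat A) I J) \<noteq> 0" using IJ(1) by (simp add: submatrix_real det_real_mat)
  then have "card {j. j < n \<and> j \<in> J} \<le> vec_space.rank m (real_mat A)"
    by (rule vec_space.rank_gt_minor[OF real_mat_carrier[OF A]])
  then have ge: "s \<le> int_rank A" unfolding int_rank_def using A IJ card_sub_range[OF IJ(2)] by auto
  obtain P Q P' Q' where inv: "unimod m P'" "unimod n Q'" "A = P' * D * Q'"
    using eqv_inverse[OF e] by blast
  have P': "P' \<in> carrier_mat m m" and Q': "Q' \<in> carrier_mat n n" using inv unfolding unimod_def by auto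
  have "real_mat A = mat m n (\<lambda>(r,c). \<Sum>i<s. real_of_int (P'$$(r,i) * D$$(i,i)) * real_of_int (Q'$$(i,c)))"
  proof (rule eq_matI)
    fix r c assume rc: "r < dim_row (mat m n (\<lambda>(r,c). \<Sum>i<s. real_of_int (P'$$(r,i) * D$$(i,i)) * real_of_int (Q'$$(i,c))))"
      "c < dim_col (mat m n (\<lambda>(r,c). \<Sum>i<s. real_of_int (P'$$(r,i) * D$$(i,i)) * real_of_int (Q'$$(i,c))))"
    then have r: "r < m" and c: "c < n" by auto
    have "real_mat A $$ (r,c) = real_of_int (A$$(r,c))" using A r c by (simp add: real_mat_index)
    also have "A$$(r,c) = (\<Sum>i<s. P'$$(r,i) * D$$(i,i) * Q'$$(i,c))"
      using diag_factor[OF D P' Q' r c] inv(3) by simp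
    finally show "real_mat A $$ (r,c) = mat m n (\<lambda>(r,c). \<Sum>i<s. real_of_int (P'$$(r,i) * D$$(i,i)) * real_of_int (Q'$$(i,c))) $$ (r,c)"
      using r c by simp
  qed (insert A, auto simp: real_mat_def)
  then have "int_rank A \<le> s" unfolding int_rank_def using A
    rank_sum_le[of m n "\<lambda>i r. real_of_int (P'$$(r,i) * D$$(i,i))" "\<lambda>i c. real_of_int (Q'$$(i,c))" s] by simp
  then show ?thesis using ge by simp
qed

lemma smith_props:
  assumes A: "A \<in> carrier_mat m n" and S: "smith_nf_of A D"
  shows "eqv m n A D \<and> (\<exists>s. diagp m n s D)"
proof -
  obtain P Q where PQ: "P \<in> carrier_mat m m" "Q \<in> carrier_mat n n" "det P \<in> {1,-1}" "det Q \<in> {1,-1}" "D = P * A * Q"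
    using S A unfolding smith_nf_of_def by auto
  have e: "eqv m n A D" unfolding eqv_def unimod_def using PQ A by blast
  have Dc: "D \<in> carrier_mat m n" using eqv_carrier[OF e] .
  obtain s where "s \<le> min m n" "\<forall>i<s. D$$(i,i) > 0" "\<forall>i. s \<le> i \<and> i < min m n \<longrightarrow> D$$(i,i) = 0"
    using S A unfolding smith_nf_of_def by auto
  moreover have "\<forall>i<m. \<forall>j<n. i \<noteq> j \<longrightarrow> D$$(i,j) = 0" using S A unfolding smith_nf_of_def by auto
  ultimately have "diagp m n s D" unfolding diagp_def using Dc by auto
  then show ?thesis using e by blast
qed

lemma elem_div:
  assumes A: "A \<in> carrier_mat m n"
  shows "\<exists>D s. eqv m n A D \<and> diagp m n s D \<and> set (elementary_divisors A) = {D$$(i,i) | i. i < s}"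
proof -
  define D where "D = (SOME D. smith_nf_of A D)"
  have S: "smith_nf_of A D" unfolding D_def using smith_exists[OF A] by (rule someI_ex)
  obtain s where e: "eqv m n A D" and d: "diagp m n s D" using smith_props[OF A S] by auto
  have sm: "s \<le> min m n" and pos: "\<forall>i<s. D$$(i,i) > 0" and zer: "\<forall>i. s \<le> i \<and> i < min m n \<longrightarrow> D$$(i,i) = 0"
    using d unfolding diagp_def by auto
  have "set (elementary_divisors A) = {x \<in> (\<lambda>i. D$$(i,i)) ` {0..<min m n}. x \<noteq> 0}"
    unfolding elementary_divisors_def Let_def D_def[symmetric] using A by auto
  also have "\<dots> = {D$$(i,i) | i. i < s}"
  proof (intro equalityI subsetI)
    fix x assume "x \<in> {x \<in> (\<lambda>i. D$$(i,i)) ` {0..<min m n}. x \<noteq> 0}"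
    then obtain i where i: "i < min m n" "x = D$$(i,i)" "x \<noteq> 0" by auto
    then have "i < s" using zer by (metis not_le)
    then show "x \<in> {D$$(i,i) | i. i < s}" using i by auto
  next
    fix x assume "x \<in> {D$$(i,i) | i. i < s}"
    then obtain i where i: "i < s" "x = D$$(i,i)" by auto
    then show "x \<in> {x \<in> (\<lambda>i. D$$(i,i)) ` {0..<min m n}. x \<noteq> 0}" using sm pos by force
  qed
  finally show ?thesis using e d by blast
qed



definition padic_vec :: "nat \<Rightarrow> real vec \<Rightarrow> bool" where
  "padic_vec p v \<longleftrightarrow> (\<forall>i<dim_vec v. padic_rat p (v$i))"

definition padic_matr :: "nat \<Rightarrow> real mat \<Rightarrow> bool" where
  "padic_matr p M \<longleftrightarrow> (\<forall>i<dim_row M. \<forall>j<dim_col M. padic_rat p (M$$(i,j)))"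

context
  fixes p :: nat
  assumes p: "prime p"
begin

lemma p_pos: "real p > 0" using p prime_gt_0_nat by simp

lemma padic_of_int: "padic_rat p (real_of_int a)"
  unfolding padic_rat_def by (rule exI[of _ a], rule exI[of _ 0]) simp

lemma padic_zero: "padic_rat p 0" using padic_of_int[of 0] by simp

lemma padic_Ints: "x \<in> \<int> \<Longrightarrow> padic_rat p x"
  using padic_of_int by (auto elim: Ints_cases)

lemma padic_add: "padic_rat p x \<Longrightarrow> padic_rat p y \<Longrightarrow> padic_rat p (x + y)"
proof -
  assume "padic_rat p x" "padic_rat p y"
  then obtain a k b l where x: "x = of_int a / real p ^ k" and y: "y = of_int b / real p ^ l"
    unfolding padic_rat_def by auto
  have "x + y = of_int (a * int p ^ l + b * int p ^ k) / real p ^ (k + l)"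
    unfolding x y using p_pos by (simp add: field_simps power_add)
  then show ?thesis unfolding padic_rat_def by blast
qed

lemma padic_mult: "padic_rat p x \<Longrightarrow> padic_rat p y \<Longrightarrow> padic_rat p (x * y)"
proof -
  assume "padic_rat p x" "padic_rat p y"
  then obtain a k b l where x: "x = of_int a / real p ^ k" and y: "y = of_int b / real p ^ l"
    unfolding padic_rat_def by auto
  have "x * y = of_int (a * b) / real p ^ (k + l)"
    unfolding x y using p_pos by (simp add: field_simps power_add)
  then show ?thesis unfolding padic_rat_def by blast
qed

lemma padic_sum: "(\<And>i. i \<in> S \<Longrightarrow> padic_rat p (f i)) \<Longrightarrow> padic_rat p (sum f S)"
proof (induction S rule: infinite_finite_induct)
  case (infinite S) then show ?case using padic_zero by simp
next
  case empty then show ?case using padic_zero by simp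
next
  case (insert x F) then show ?case using padic_add by simp
qed

lemma padic_inv_pow: "padic_rat p (1 / real p ^ k)"
  unfolding padic_rat_def by (rule exI[of _ 1], rule exI[of _ k]) simp

lemma padic_inv_imp:
  assumes d: "d > 0" and pd: "padic_rat p (1 / real_of_int d)"
  shows "\<exists>k. d = int p ^ k"
proof -
  obtain a k where e: "1 / real_of_int d = of_int a / real p ^ k" using pd unfolding padic_rat_def by auto
  have "real p ^ k = of_int a * real_of_int d" using e d p_pos by (simp add: field_simps)
  then have "int p ^ k = a * d" by (metis of_int_eq_iff of_int_mult of_int_of_nat_eq of_int_power)
  then have "d dvd int p ^ k" by simp
  then have "nat d dvd p ^ k" using d by (metis int_dvd_int_iff of_nat_power pos_int_cases nat_int)
  then obtain i where "nat d = p ^ i" using divides_primepow_nat[OF p] by auto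
  then have "d = int p ^ i" using d by (metis int_nat_eq less_imp_le of_nat_power)
  then show ?thesis by blast
qed

lemma padic_mult_mat_vec:
  assumes "padic_matr p M" "padic_vec p v" "dim_col M = dim_vec v"
  shows "padic_vec p (M *\<^sub>v v)"
  unfolding padic_vec_def
proof (intro allI impI)
  fix i assume i: "i < dim_vec (M *\<^sub>v v)"
  have "(M *\<^sub>v v) $ i = (\<Sum>j\<in>{0..<dim_vec v}. M$$(i,j) * v$j)"
    using i assms(3) by (simp add: scalar_prod_def)
  also have "padic_rat p \<dots>"
    using assms i unfolding padic_matr_def padic_vec_def by (intro padic_sum padic_mult) auto
  finally show "padic_rat p ((M *\<^sub>v v) $ i)" .
qed

lemma padic_mult_mat:
  assumes "padic_matr p M" "padic_matr p N" "dim_col M = dim_row N"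
  shows "padic_matr p (M * N)"
  unfolding padic_matr_def
proof (intro allI impI)
  fix i j assume i: "i < dim_row (M * N)" and j: "j < dim_col (M * N)"
  have "(M * N) $$ (i,j) = (\<Sum>k\<in>{0..<dim_row N}. M$$(i,k) * N$$(k,j))"
    using i j assms(3) by (simp add: scalar_prod_def)
  also have "padic_rat p \<dots>"
    using assms i j unfolding padic_matr_def by (intro padic_sum padic_mult) auto
  finally show "padic_rat p ((M * N) $$ (i,j))" .
qed

lemma padic_scalar:
  assumes "padic_vec p v" "padic_vec p w" "dim_vec v = dim_vec w"
  shows "padic_rat p (v \<bullet> w)"
  using assms unfolding scalar_prod_def padic_vec_def by (intro padic_sum padic_mult) auto

lemma padic_real_mat: "padic_matr p (real_mat A)"
  unfolding padic_matr_def real_mat_def using padic_of_int by simp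

lemma padic_integral: "integral_vec z \<Longrightarrow> padic_vec p z"
  unfolding integral_vec_def padic_vec_def using padic_Ints by auto

end



locale decomp =
  fixes m n s :: nat and A D P Q P' Q' :: "int mat"
  assumes A: "A \<in> carrier_mat m n" and Pc: "P \<in> carrier_mat m m" and P'c: "P' \<in> carrier_mat m m"
    and Qc: "Q \<in> carrier_mat n n" and Q'c: "Q' \<in> carrier_mat n n"
    and PP': "P * P' = 1\<^sub>m m" and QQ': "Q' * Q = 1\<^sub>m n"
    and AD: "A = P' * D * Q'" and diag: "diagp m n s D"
begin

lemma Dc: "D \<in> carrier_mat m n" using diag unfolding diagp_def by auto
lemma sm: "s \<le> min m n" using diag unfolding diagp_def by auto
lemma dpos: "i < s \<Longrightarrow> D$$(i,i) > 0" using diag unfolding diagp_def by auto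

lemma rm: "X \<in> carrier_mat a b \<Longrightarrow> Y \<in> carrier_mat b c \<Longrightarrow> real_mat (X * Y) = real_mat X * real_mat Y"
  unfolding real_mat_def by (rule of_int_hom.mat_hom_mult)

lemma rc: "X \<in> carrier_mat a b \<Longrightarrow> real_mat X \<in> carrier_mat a b" unfolding real_mat_def by simp

lemma RA: "real_mat A = real_mat P' * real_mat D * real_mat Q'"
  unfolding AD using rm[of P' m m D n] rm[of "P' * D" m n Q' n] P'c Dc Q'c by simp

lemma RPP: "real_mat P * real_mat P' = 1\<^sub>m m"
  using rm[OF Pc P'c] PP' by (simp add: real_mat_def of_int_hom.mat_hom_one)

lemma RQQ: "real_mat Q' * real_mat Q = 1\<^sub>m n"
  using rm[OF Q'c Qc] QQ' by (simp add: real_mat_def of_int_hom.mat_hom_one)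

lemma K3: "v \<in> carrier_vec m \<Longrightarrow> real_mat P *\<^sub>v (real_mat P' *\<^sub>v v) = v"
  using assoc_mult_mat_vec[OF rc[OF Pc] rc[OF P'c], of v] RPP by simp

lemma K3': "v \<in> carrier_vec n \<Longrightarrow> real_mat Q' *\<^sub>v (real_mat Q *\<^sub>v v) = v"
  using assoc_mult_mat_vec[OF rc[OF Q'c] rc[OF Qc], of v] RQQ by simp

lemma AV: "w \<in> carrier_vec n \<Longrightarrow> real_mat A *\<^sub>v w = real_mat P' *\<^sub>v (real_mat D *\<^sub>v (real_mat Q' *\<^sub>v w))"
proof -
  assume w: "w \<in> carrier_vec n"
  have "real_mat A *\<^sub>v w = (real_mat P' * real_mat D) *\<^sub>v (real_mat Q' *\<^sub>v w)"
    unfolding RA by (rule assoc_mult_mat_vec[OF _ rc[OF Q'c] w], insert P'c Dc, auto simp: real_mat_def)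
  also have "\<dots> = real_mat P' *\<^sub>v (real_mat D *\<^sub>v (real_mat Q' *\<^sub>v w))"
    by (rule assoc_mult_mat_vec[OF rc[OF P'c] rc[OF Dc]], insert Q'c w, auto simp: real_mat_def)
  finally show ?thesis .
qed

lemma K1: "w \<in> carrier_vec n \<Longrightarrow> real_mat P *\<^sub>v (real_mat A *\<^sub>v w) = real_mat D *\<^sub>v (real_mat Q' *\<^sub>v w)"
  using AV K3 Dc Q'c by (simp add: real_mat_def)

lemma K2: "u \<in> carrier_vec n \<Longrightarrow> real_mat A *\<^sub>v (real_mat Q *\<^sub>v u) = real_mat P' *\<^sub>v (real_mat D *\<^sub>v u)"
  using AV[of "real_mat Q *\<^sub>v u"] K3'[of u] Qc by (simp add: real_mat_def)

lemma HD: assumes u: "u \<in> carrier_vec n" and j: "j < m"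
  shows "(real_mat D *\<^sub>v u)$j = (if j < s then real_of_int (D$$(j,j)) * u$j else 0)"
proof -
  have off: "\<forall>i<m. \<forall>k<n. i \<noteq> k \<longrightarrow> D$$(i,k) = 0" and zer: "\<forall>i. s \<le> i \<and> i < min m n \<longrightarrow> D$$(i,i) = 0"
    using diag unfolding diagp_def by auto
  have "(real_mat D *\<^sub>v u)$j = (\<Sum>k\<in>{0..<n}. real_of_int (D$$(j,k)) * u$k)"
    using u j Dc by (simp add: scalar_prod_def real_mat_def)
  also have "\<dots> = (\<Sum>k\<in>{0..<n}. if k = j then real_of_int (D$$(j,j)) * u$j else 0)"
    by (rule sum.cong, insert off j, auto)
  also have "\<dots> = (if j < s then real_of_int (D$$(j,j)) * u$j else 0)"
    using zer sm j by auto
  finally show ?thesis .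
qed

definition col_gen :: "nat \<Rightarrow> bool" where
  "col_gen p \<longleftrightarrow> (\<forall>z\<in>carrier_vec m. integral_vec z \<and> (\<exists>w\<in>carrier_vec n. z = real_mat A *\<^sub>v w) \<longrightarrow>
     (\<exists>w\<in>carrier_vec n. padic_vec p w \<and> z = real_mat A *\<^sub>v w))"

definition good :: "nat \<Rightarrow> bool" where
  "good p \<longleftrightarrow> (\<forall>i<s. \<exists>k. D$$(i,i) = int p ^ k)"

lemma unit_D:
  assumes i: "i < s"
  shows "real_mat D *\<^sub>v ((1 / real_of_int (D$$(i,i))) \<cdot>\<^sub>v unit_vec n i) = unit_vec m i"
proof (rule eq_vecI)
  have im: "i < m" "i < n" using i sm by auto
  have d: "D$$(i,i) > 0" using dpos[OF i] .
  fix j assume j: "j < dim_vec (unit_vec m i)"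
  then have jm: "j < m" by simp
  show "(real_mat D *\<^sub>v ((1 / real_of_int (D$$(i,i))) \<cdot>\<^sub>v unit_vec n i)) $ j = unit_vec m i $ j"
    using HD[of "(1 / real_of_int (D$$(i,i))) \<cdot>\<^sub>v unit_vec n i" j] jm im d sm assms
    by (cases "j = i") (auto simp: unit_vec_def)
qed (insert Dc, auto simp: real_mat_def)

lemma integral_P'col: assumes i: "i < m" shows "integral_vec (real_mat P' *\<^sub>v unit_vec m i)"
  unfolding integral_vec_def
proof (intro allI impI)
  fix j assume j: "j < dim_vec (real_mat P' *\<^sub>v unit_vec m i)"
  then have j': "j < m" using P'c by (simp add: real_mat_def)
  have "(real_mat P' *\<^sub>v unit_vec m i) $ j = row (real_mat P') j \<bullet> unit_vec m i" using j by simp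
  also have "\<dots> = row (real_mat P') j $ i" by (rule scalar_prod_right_unit, insert P'c i, auto simp: real_mat_def)
  also have "\<dots> = real_of_int (P'$$(j,i))" using P'c i j' by (simp add: real_mat_def)
  finally show "(real_mat P' *\<^sub>v unit_vec m i) $ j \<in> \<int>" by simp
qed

lemma colgen_good: assumes p: "prime p" and cg: "col_gen p" shows "good p"
  unfolding good_def
proof (intro allI impI)
  fix i assume i: "i < s"
  have im: "i < m" "i < n" using i sm by auto
  define d where "d = D$$(i,i)"
  have d: "d > 0" using dpos[OF i] d_def by simp
  define u where "u = (1 / real_of_int d) \<cdot>\<^sub>v unit_vec n i"
  have u: "u \<in> carrier_vec n" unfolding u_def by simp
  define z where "z = real_mat P' *\<^sub>v unit_vec m i"
  have zc: "z \<in> carrier_vec m" unfolding z_def using P'c by (simp add: real_mat_def)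
  have "z = real_mat A *\<^sub>v (real_mat Q *\<^sub>v u)" using K2[OF u] unit_D[OF i] unfolding z_def u_def d_def by simp
  moreover have "real_mat Q *\<^sub>v u \<in> carrier_vec n" using Qc u by (simp add: real_mat_def)
  ultimately obtain w where w: "w \<in> carrier_vec n" "padic_vec p w" "z = real_mat A *\<^sub>v w"
    using cg zc integral_P'col[OF im(1)] unfolding col_gen_def z_def by blast
  have X: "real_mat D *\<^sub>v (real_mat Q' *\<^sub>v w) = unit_vec m i"
    using K1[OF w(1)] K3[of "unit_vec m i"] w(3) unfolding z_def by simp
  have "1 = (real_mat D *\<^sub>v (real_mat Q' *\<^sub>v w)) $ i" unfolding X using im by simp
  also have "\<dots> = real_of_int d * (real_mat Q' *\<^sub>v w) $ i"
    using HD[of "real_mat Q' *\<^sub>v w" i] im i w(1) Q'c d_def by (simp add: real_mat_def)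
  finally have e: "(real_mat Q' *\<^sub>v w) $ i = 1 / real_of_int d" using d by (simp add: field_simps)
  have "padic_vec p (real_mat Q' *\<^sub>v w)"
    by (rule padic_mult_mat_vec[OF p padic_real_mat[OF p] w(2)], insert Q'c w(1), simp add: real_mat_def)
  then have "padic_rat p (1 / real_of_int d)" using e im Q'c unfolding padic_vec_def by (auto simp: real_mat_def)
  then show "\<exists>k. D$$(i,i) = int p ^ k" using padic_inv_imp[OF p d] d_def by simp
qed

definition p3 :: "nat \<Rightarrow> bool" where
  "p3 p \<longleftrightarrow> (\<forall>x \<in> carrier_vec n. \<forall>y \<in> carrier_vec m.
                 integral_vec (transpose_mat (real_mat A) *\<^sub>v y) \<and> integral_vec (real_mat A *\<^sub>v x)
                 \<longrightarrow> padic_rat p (y \<bullet> (real_mat A *\<^sub>v x)))"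

definition p6 :: "nat \<Rightarrow> bool" where
  "p6 p \<longleftrightarrow> (\<exists>B \<in> carrier_mat n m. (\<forall>i < n. \<forall>j < m. padic_rat p (B $$ (i, j)))
                 \<and> real_mat A * B * real_mat A = real_mat A)"

lemma RAc: "real_mat A \<in> carrier_mat m n" using A by (simp add: real_mat_def)

lemma p3_good: assumes p: "prime p" and h: "p3 p" shows "good p"
  unfolding good_def
proof (intro allI impI)
  fix i assume i: "i < s"
  have im: "i < m" "i < n" using i sm by auto
  define d where "d = D$$(i,i)"
  have d: "d > 0" using dpos[OF i] d_def by simp
  define u where "u = (1 / real_of_int d) \<cdot>\<^sub>v unit_vec n i"
  have u: "u \<in> carrier_vec n" unfolding u_def by simp
  define x where "x = real_mat Q *\<^sub>v u"
  have xc: "x \<in> carrier_vec n" unfolding x_def using Qc u by (simp add: real_mat_def)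
  define y where "y = (1 / real_of_int d) \<cdot>\<^sub>v ((real_mat P)\<^sup>T *\<^sub>v unit_vec m i)"
  have yc: "y \<in> carrier_vec m" unfolding y_def using Pc by (simp add: real_mat_def)
  have RPc: "real_mat P \<in> carrier_mat m m" using Pc by (simp add: real_mat_def)
  have Ax: "real_mat A *\<^sub>v x = real_mat P' *\<^sub>v unit_vec m i"
    using K2[OF u] unit_D[OF i] unfolding x_def u_def d_def by simp
  have key: "y \<bullet> v = (1 / real_of_int d) * (real_mat P *\<^sub>v v) $ i" if v: "v \<in> carrier_vec m" for v
  proof -
    have "y \<bullet> v = (1 / real_of_int d) * (((real_mat P)\<^sup>T *\<^sub>v unit_vec m i) \<bullet> v)"
      unfolding y_def by (rule smult_scalar_prod_distrib, insert v Pc, auto simp: real_mat_def)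
    also have "((real_mat P)\<^sup>T *\<^sub>v unit_vec m i) \<bullet> v = unit_vec m i \<bullet> (real_mat P *\<^sub>v v)"
      by (rule transpose_vec_mult_scalar[OF RPc v], insert im, simp)
    also have "\<dots> = (real_mat P *\<^sub>v v) $ i"
      by (rule scalar_prod_left_unit, insert RPc v im, auto)
    finally show ?thesis .
  qed
  have i1: "integral_vec (real_mat A *\<^sub>v x)" unfolding Ax using integral_P'col[OF im(1)] .
  have i2: "integral_vec ((real_mat A)\<^sup>T *\<^sub>v y)"
    unfolding integral_vec_def
  proof (intro allI impI)
    fix j assume j: "j < dim_vec ((real_mat A)\<^sup>T *\<^sub>v y)"
    then have jn: "j < n" using A by (simp add: real_mat_def)
    have ej: "unit_vec n j \<in> carrier_vec n" by simp
    have Aej: "real_mat A *\<^sub>v unit_vec n j \<in> carrier_vec m" using RAc by simp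
    have "((real_mat A)\<^sup>T *\<^sub>v y) $ j = ((real_mat A)\<^sup>T *\<^sub>v y) \<bullet> unit_vec n j"
      by (rule scalar_prod_right_unit[symmetric], insert RAc yc jn, auto)
    also have "\<dots> = y \<bullet> (real_mat A *\<^sub>v unit_vec n j)"
      by (rule transpose_vec_mult_scalar[OF RAc ej yc])
    also have "\<dots> = (1 / real_of_int d) * (real_mat D *\<^sub>v (real_mat Q' *\<^sub>v unit_vec n j)) $ i"
      using key[OF Aej] K1[OF ej] by simp
    also have "\<dots> = (real_mat Q' *\<^sub>v unit_vec n j) $ i"
      using HD[of "real_mat Q' *\<^sub>v unit_vec n j" i] Q'c im i d d_def by (simp add: real_mat_def)
    also have "\<dots> = real_of_int (Q'$$(i,j))"
      using Q'c im jn by (simp add: real_mat_def scalar_prod_right_unit)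
    finally show "((real_mat A)\<^sup>T *\<^sub>v y) $ j \<in> \<int>" by simp
  qed
  have "y \<bullet> (real_mat A *\<^sub>v x) = (1 / real_of_int d) * (real_mat P *\<^sub>v (real_mat P' *\<^sub>v unit_vec m i)) $ i"
    unfolding Ax by (rule key, insert P'c, simp add: real_mat_def)
  also have "\<dots> = 1 / real_of_int d" using K3[of "unit_vec m i"] im by simp
  finally have "padic_rat p (1 / real_of_int d)" using h xc yc i1 i2 unfolding p3_def by metis
  then show "\<exists>k. D$$(i,i) = int p ^ k" using padic_inv_imp[OF p d] d_def by simp
qed

definition Dp :: "real mat" where
  "Dp = mat n m (\<lambda>(i,j). if i = j \<and> i < s then 1 / real_of_int (D$$(i,i)) else 0)"

lemma Dpc: "Dp \<in> carrier_mat n m" unfolding Dp_def by simp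

lemma HDp: assumes w: "w \<in> carrier_vec m" and k: "k < n"
  shows "(Dp *\<^sub>v w)$k = (if k < s then w$k / real_of_int (D$$(k,k)) else 0)"
proof -
  have "(Dp *\<^sub>v w)$k = (\<Sum>j\<in>{0..<m}. Dp$$(k,j) * w$j)"
    using w k by (simp add: scalar_prod_def Dp_def)
  also have "\<dots> = (\<Sum>j\<in>{0..<m}. if j = k then (if k < s then w$k / real_of_int (D$$(k,k)) else 0) else 0)"
    by (rule sum.cong, insert k, auto simp: Dp_def)
  also have "\<dots> = (if k < s then w$k / real_of_int (D$$(k,k)) else 0)"
    using sm k by auto
  finally show ?thesis .
qed

lemma K4: assumes u: "u \<in> carrier_vec n"
  shows "real_mat D *\<^sub>v (Dp *\<^sub>v (real_mat D *\<^sub>v u)) = real_mat D *\<^sub>v u"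
proof (rule eq_vecI)
  have RDc: "real_mat D \<in> carrier_mat m n" using Dc by (simp add: real_mat_def)
  have Du: "real_mat D *\<^sub>v u \<in> carrier_vec m" using RDc u by simp
  have DDu: "Dp *\<^sub>v (real_mat D *\<^sub>v u) \<in> carrier_vec n" using Dpc Du by simp
  fix j assume "j < dim_vec (real_mat D *\<^sub>v u)"
  then have j: "j < m" using RDc by simp
  show "(real_mat D *\<^sub>v (Dp *\<^sub>v (real_mat D *\<^sub>v u))) $ j = (real_mat D *\<^sub>v u) $ j"
  proof (cases "j < s")
    case True
    then have jn: "j < n" using sm by auto
    have pos: "D$$(j,j) > 0" using dpos[OF True] .
    show ?thesis unfolding HD[OF DDu j] HD[OF u j] HDp[OF Du jn] HD[OF u j] using True pos by simp
  next
    case False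
    show ?thesis unfolding HD[OF DDu j] HD[OF u j] using False by simp
  qed
qed (simp)

lemma mat_eq_vec:
  assumes X: "X \<in> carrier_mat a b" and Y: "Y \<in> carrier_mat a b"
    and h: "\<And>v. v \<in> carrier_vec b \<Longrightarrow> X *\<^sub>v v = (Y :: real mat) *\<^sub>v v"
  shows "X = Y"
proof (rule eq_matI)
  fix i j assume i: "i < dim_row Y" and j: "j < dim_col Y"
  have "X $$ (i,j) = (X *\<^sub>v unit_vec b j) $ i"
    using X Y i j by (simp add: scalar_prod_right_unit)
  also have "\<dots> = (Y *\<^sub>v unit_vec b j) $ i" using h[of "unit_vec b j"] by simp
  also have "\<dots> = Y $$ (i,j)" using X Y i j by (simp add: scalar_prod_right_unit)
  finally show "X $$ (i,j) = Y $$ (i,j)" .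
qed (insert X Y, auto)

lemma good_p6: assumes p: "prime p" and g: "good p" shows "p6 p"
proof -
  define B where "B = real_mat Q * Dp * real_mat P"
  have RQc: "real_mat Q \<in> carrier_mat n n" and RPc: "real_mat P \<in> carrier_mat m m"
    and RP'c: "real_mat P' \<in> carrier_mat m m" and RQ'c: "real_mat Q' \<in> carrier_mat n n"
    and RDc: "real_mat D \<in> carrier_mat m n"
    using Qc Pc P'c Q'c Dc by (auto simp: real_mat_def)
  have Bc: "B \<in> carrier_mat n m" unfolding B_def using RQc Dpc RPc by simp
  have Bv: "B *\<^sub>v t = real_mat Q *\<^sub>v (Dp *\<^sub>v (real_mat P *\<^sub>v t))" if t: "t \<in> carrier_vec m" for t
  proof -
    have "B *\<^sub>v t = (real_mat Q * Dp) *\<^sub>v (real_mat P *\<^sub>v t)"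
      unfolding B_def by (rule assoc_mult_mat_vec[OF mult_carrier_mat[OF RQc Dpc] RPc t])
    also have "\<dots> = real_mat Q *\<^sub>v (Dp *\<^sub>v (real_mat P *\<^sub>v t))"
      by (rule assoc_mult_mat_vec[OF RQc Dpc], insert RPc t, simp)
    finally show ?thesis .
  qed
  have pDp: "padic_matr p Dp" unfolding padic_matr_def
  proof (intro allI impI)
    fix i j assume "i < dim_row Dp" "j < dim_col Dp"
    then have ij: "i < n" "j < m" unfolding Dp_def by auto
    show "padic_rat p (Dp $$ (i,j))"
    proof (cases "i = j \<and> i < s")
      case True
      then obtain k where "D$$(i,i) = int p ^ k" using g unfolding good_def by auto
      then have "Dp $$ (i,j) = 1 / real p ^ k" using True ij unfolding Dp_def by simp
      then show ?thesis using padic_inv_pow[OF p] by simp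
    next
      case False
      then have "Dp $$ (i,j) = 0" using ij unfolding Dp_def by auto
      then show ?thesis using padic_zero[OF p] by simp
    qed
  qed
  have pB: "padic_matr p B" unfolding B_def
    by (rule padic_mult_mat[OF p padic_mult_mat[OF p padic_real_mat[OF p] pDp] padic_real_mat[OF p]],
        insert RQc Dpc RPc, auto)
  have "real_mat A * B * real_mat A = real_mat A"
  proof (rule mat_eq_vec[OF _ RAc])
    show "real_mat A * B * real_mat A \<in> carrier_mat m n" using RAc Bc by simp
    fix v :: "real vec" assume v: "v \<in> carrier_vec n"
    have Av: "real_mat A *\<^sub>v v \<in> carrier_vec m" using RAc v by simp
    have Q'v: "real_mat Q' *\<^sub>v v \<in> carrier_vec n" using RQ'c v by simp
    have "(real_mat A * B * real_mat A) *\<^sub>v v = (real_mat A * B) *\<^sub>v (real_mat A *\<^sub>v v)"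
      by (rule assoc_mult_mat_vec[OF mult_carrier_mat[OF RAc Bc] RAc v])
    also have "\<dots> = real_mat A *\<^sub>v (B *\<^sub>v (real_mat A *\<^sub>v v))"
      by (rule assoc_mult_mat_vec[OF RAc Bc Av])
    also have "\<dots> = real_mat A *\<^sub>v (real_mat Q *\<^sub>v (Dp *\<^sub>v (real_mat P *\<^sub>v (real_mat A *\<^sub>v v))))"
      using Bv[OF Av] by simp
    also have "\<dots> = real_mat P' *\<^sub>v (real_mat D *\<^sub>v (Dp *\<^sub>v (real_mat P *\<^sub>v (real_mat A *\<^sub>v v))))"
      by (rule K2, insert Dpc RPc Av, simp)
    also have "\<dots> = real_mat P' *\<^sub>v (real_mat D *\<^sub>v (Dp *\<^sub>v (real_mat D *\<^sub>v (real_mat Q' *\<^sub>v v))))"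
      using K1[OF v] by simp
    also have "\<dots> = real_mat P' *\<^sub>v (real_mat D *\<^sub>v (real_mat Q' *\<^sub>v v))" using K4[OF Q'v] by simp
    also have "\<dots> = real_mat A *\<^sub>v v" using AV[OF v] by simp
    finally show "(real_mat A * B * real_mat A) *\<^sub>v v = real_mat A *\<^sub>v v" .
  qed
  then show ?thesis unfolding p6_def using Bc pB unfolding padic_matr_def by auto
qed

lemma ABA_vec:
  assumes Bc: "B \<in> carrier_mat n m" and ABA: "real_mat A * B * real_mat A = real_mat A" and w: "w \<in> carrier_vec n"
  shows "real_mat A *\<^sub>v w = real_mat A *\<^sub>v (B *\<^sub>v (real_mat A *\<^sub>v w))"
proof -
  have Aw: "real_mat A *\<^sub>v w \<in> carrier_vec m" using RAc w by simp
  have "real_mat A *\<^sub>v w = (real_mat A * B * real_mat A) *\<^sub>v w" using ABA by simp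
  also have "\<dots> = (real_mat A * B) *\<^sub>v (real_mat A *\<^sub>v w)"
    by (rule assoc_mult_mat_vec[OF mult_carrier_mat[OF RAc Bc] RAc w])
  also have "\<dots> = real_mat A *\<^sub>v (B *\<^sub>v (real_mat A *\<^sub>v w))"
    by (rule assoc_mult_mat_vec[OF RAc Bc Aw])
  finally show ?thesis .
qed

lemma p6_colgen: assumes p: "prime p" and h: "p6 p" shows "col_gen p"
proof -
  obtain B where Bc: "B \<in> carrier_mat n m" and pB: "\<forall>i<n. \<forall>j<m. padic_rat p (B $$ (i, j))"
    and ABA: "real_mat A * B * real_mat A = real_mat A" using h unfolding p6_def by auto
  have pBm: "padic_matr p B" using pB Bc unfolding padic_matr_def by auto
  show ?thesis unfolding col_gen_def
  proof (intro ballI impI)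
    fix z assume zc: "z \<in> carrier_vec m" and h: "integral_vec z \<and> (\<exists>w\<in>carrier_vec n. z = real_mat A *\<^sub>v w)"
    then obtain w where w: "w \<in> carrier_vec n" "z = real_mat A *\<^sub>v w" by auto
    have "z = real_mat A *\<^sub>v (B *\<^sub>v z)" using ABA_vec[OF Bc ABA w(1)] w(2) by simp
    moreover have "B *\<^sub>v z \<in> carrier_vec n" using Bc zc by simp
    moreover have "padic_vec p (B *\<^sub>v z)"
      by (rule padic_mult_mat_vec[OF p pBm padic_integral[OF p]], insert h Bc zc, auto)
    ultimately show "\<exists>w\<in>carrier_vec n. padic_vec p w \<and> z = real_mat A *\<^sub>v w" by blast
  qed
qed

lemma p6_p3: assumes p: "prime p" and h: "p6 p" shows "p3 p"
proof -
  obtain B where Bc: "B \<in> carrier_mat n m" and pB: "\<forall>i<n. \<forall>j<m. padic_rat p (B $$ (i, j))"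
    and ABA: "real_mat A * B * real_mat A = real_mat A" using h unfolding p6_def by auto
  have pBm: "padic_matr p B" using pB Bc unfolding padic_matr_def by auto
  show ?thesis unfolding p3_def
  proof (intro ballI impI)
    fix x y assume xc: "x \<in> carrier_vec n" and yc: "y \<in> carrier_vec m"
      and h: "integral_vec ((real_mat A)\<^sup>T *\<^sub>v y) \<and> integral_vec (real_mat A *\<^sub>v x)"
    have Ax: "real_mat A *\<^sub>v x \<in> carrier_vec m" using RAc xc by simp
    have BAx: "B *\<^sub>v (real_mat A *\<^sub>v x) \<in> carrier_vec n" using Bc Ax by simp
    have "y \<bullet> (real_mat A *\<^sub>v x) = y \<bullet> (real_mat A *\<^sub>v (B *\<^sub>v (real_mat A *\<^sub>v x)))"
      using ABA_vec[OF Bc ABA xc] by simp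
    also have "\<dots> = ((real_mat A)\<^sup>T *\<^sub>v y) \<bullet> (B *\<^sub>v (real_mat A *\<^sub>v x))"
      by (rule transpose_vec_mult_scalar[OF RAc BAx yc, symmetric])
    finally have e: "y \<bullet> (real_mat A *\<^sub>v x) = ((real_mat A)\<^sup>T *\<^sub>v y) \<bullet> (B *\<^sub>v (real_mat A *\<^sub>v x))" .
    have "padic_vec p (B *\<^sub>v (real_mat A *\<^sub>v x))"
      by (rule padic_mult_mat_vec[OF p pBm padic_integral[OF p]], insert h Bc Ax RAc, auto)
    moreover have "padic_vec p ((real_mat A)\<^sup>T *\<^sub>v y)" using h padic_integral[OF p] by auto
    ultimately show "padic_rat p (y \<bullet> (real_mat A *\<^sub>v x))" unfolding e
      by (intro padic_scalar[OF p]) (insert RAc Bc, auto)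
  qed
qed

end



lemma padic_gen_iff:
  assumes A: "A \<in> carrier_mat m n"
  shows "padic_generating p m (map (map_vec real_of_int) (cols A)) \<longleftrightarrow>
    (\<forall>z\<in>carrier_vec m. integral_vec z \<and> (\<exists>w\<in>carrier_vec n. z = real_mat A *\<^sub>v w) \<longrightarrow>
       (\<exists>w\<in>carrier_vec n. padic_vec p w \<and> z = real_mat A *\<^sub>v w))"
proof -
  let ?vs = "map (map_vec real_of_int) (cols A)"
  have len: "length ?vs = n" using A by simp
  have lc: "lin_comb m ?vs c = real_mat A *\<^sub>v vec n c" for c
  proof (rule eq_vecI)
    fix j assume "j < dim_vec (real_mat A *\<^sub>v vec n c)"
    then have j: "j < m" using A by (simp add: real_mat_def)
    have "lin_comb m ?vs c $ j = (\<Sum>i<n. c i * real_of_int (A$$(j,i)))"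
      unfolding lin_comb_def using j len A by (simp add: cols_def)
    also have "\<dots> = (real_mat A *\<^sub>v vec n c) $ j"
      using j A by (simp add: real_mat_def scalar_prod_def lessThan_atLeast0 mult.commute)
    finally show "lin_comb m ?vs c $ j = (real_mat A *\<^sub>v vec n c) $ j" .
  qed (insert A, auto simp: lin_comb_def real_mat_def)
  have vw: "vec n (\<lambda>i. w $ i) = w" if "w \<in> carrier_vec n" for w :: "real vec"
    using that by (intro eq_vecI) auto
  have e1: "(\<exists>c. z = lin_comb m ?vs c) \<longleftrightarrow> (\<exists>w\<in>carrier_vec n. z = real_mat A *\<^sub>v w)" for z
    unfolding lc by (metis vec_carrier vw)
  have e2: "(\<exists>c. (\<forall>i<length ?vs. padic_rat p (c i)) \<and> z = lin_comb m ?vs c) \<longleftrightarrow>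
     (\<exists>w\<in>carrier_vec n. padic_vec p w \<and> z = real_mat A *\<^sub>v w)" for z
  proof
    assume "\<exists>c. (\<forall>i<length ?vs. padic_rat p (c i)) \<and> z = lin_comb m ?vs c"
    then obtain c where c: "\<forall>i<n. padic_rat p (c i)" "z = lin_comb m ?vs c" using len by auto
    show "\<exists>w\<in>carrier_vec n. padic_vec p w \<and> z = real_mat A *\<^sub>v w"
      using c unfolding lc padic_vec_def by (intro bexI[of _ "vec n c"]) auto
  next
    assume "\<exists>w\<in>carrier_vec n. padic_vec p w \<and> z = real_mat A *\<^sub>v w"
    then obtain w where w: "w \<in> carrier_vec n" "padic_vec p w" "z = real_mat A *\<^sub>v w" by auto
    show "\<exists>c. (\<forall>i<length ?vs. padic_rat p (c i)) \<and> z = lin_comb m ?vs c"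
      using w vw[OF w(1)] unfolding lc len padic_vec_def by (intro exI[of _ "\<lambda>i. w $ i"]) auto
  qed
  show ?thesis unfolding padic_generating_def e1 e2 ..
qed

lemma dvd_prime_pow_int:
  assumes p: "prime p" and d: "(d::int) > 0" and dv: "d dvd int p ^ k"
  shows "\<exists>j. d = int p ^ j"
proof -
  have "nat d dvd p ^ k" using d dv by (metis int_dvd_int_iff of_nat_power pos_int_cases nat_int)
  then obtain i where "nat d = p ^ i" using divides_primepow_nat[OF p] by auto
  then have "d = int p ^ i" using d by (metis int_nat_eq less_imp_le of_nat_power)
  then show ?thesis by blast
qed

lemma prod_pow_iff:
  fixes s :: nat
  assumes p: "prime p" and pos: "\<forall>i<s. (d i :: int) > 0"
  shows "(\<exists>k. (\<Prod>i<s. d i) = int p ^ k) \<longleftrightarrow> (\<forall>i<s. \<exists>k. d i = int p ^ k)"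
proof
  assume "\<exists>k. (\<Prod>i<s. d i) = int p ^ k"
  then obtain k where k: "(\<Prod>i<s. d i) = int p ^ k" by auto
  show "\<forall>i<s. \<exists>k. d i = int p ^ k"
  proof (intro allI impI)
    fix i assume i: "i < s"
    have "d i dvd (\<Prod>i<s. d i)" using i by (intro dvd_prodI) auto
    then show "\<exists>k. d i = int p ^ k" using dvd_prime_pow_int[OF p] pos i k by metis
  qed
next
  assume h: "\<forall>i<s. \<exists>k. d i = int p ^ k"
  then show "\<exists>k. (\<Prod>i<s. d i) = int p ^ k"
  proof (induction s)
    case 0 then show ?case by (intro exI[of _ 0]) simp
  next
    case (Suc s)
    then obtain k where k: "(\<Prod>i<s. d i) = int p ^ k" by auto
    obtain j where j: "d s = int p ^ j" using Suc.prems by auto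
    show ?case using k j by (intro exI[of _ "k + j"]) (simp add: power_add)
  qed
qed

lemma diagp_transpose: "diagp m n s D \<Longrightarrow> diagp n m s (D\<^sup>T)"
  unfolding diagp_def by auto

theorem theorem1p3:
  fixes A :: "int mat" and m n r p :: nat
  assumes "A \<in> carrier_mat m n"
    and "int_rank A = r"
    and "prime p"
  defines "P1 \<equiv> padic_generating p m (map (map_vec real_of_int) (cols A))"
    and "P2 \<equiv> padic_generating p n (map (map_vec real_of_int) (rows A))"
    and "P3 \<equiv> (\<forall>x \<in> carrier_vec n. \<forall>y \<in> carrier_vec m.
                 integral_vec (transpose_mat (real_mat A) *\<^sub>v y) \<and> integral_vec (real_mat A *\<^sub>v x)
                 \<longrightarrow> padic_rat p (y \<bullet> (real_mat A *\<^sub>v x)))"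
    and "P4 \<equiv> (\<forall>d \<in> set (elementary_divisors A). \<exists>k. d = int p ^ k)"
    and "P5 \<equiv> (\<exists>k. Gcd (minors A r) = int p ^ k)"
    and "P6 \<equiv> (\<exists>B \<in> carrier_mat n m. (\<forall>i < n. \<forall>j < m. padic_rat p (B $$ (i, j)))
                 \<and> real_mat A * B * real_mat A = real_mat A)"
  shows "(P1 \<longleftrightarrow> P2) \<and> (P1 \<longleftrightarrow> P3) \<and> (P1 \<longleftrightarrow> P4) \<and> (P1 \<longleftrightarrow> P5) \<and> (P1 \<longleftrightarrow> P6)"
proof -
  note A = assms(1) and p = assms(3)
  obtain D s where e: "eqv m n A D" and dg: "diagp m n s D"
    and ed: "set (elementary_divisors A) = {D$$(i,i) | i. i < s}"
    using elem_div[OF A] by blast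
  obtain P Q P' Q' where inv: "unimod m P" "unimod n Q" "unimod m P'" "unimod n Q'" "D = P * A * Q" "A = P' * D * Q'"
     "P' * P = 1\<^sub>m m" "P * P' = 1\<^sub>m m" "Q * Q' = 1\<^sub>m n" "Q' * Q = 1\<^sub>m n"
    using eqv_inverse[OF e] by blast
  have c: "P \<in> carrier_mat m m" "Q \<in> carrier_mat n n" "P' \<in> carrier_mat m m" "Q' \<in> carrier_mat n n"
    using inv unfolding unimod_def by auto
  have Dc: "D \<in> carrier_mat m n" using dg unfolding diagp_def by auto
  interpret d1: decomp m n s A D P Q P' Q'
    by (rule decomp.intro[OF A c(1) c(3) c(2) c(4) inv(8) inv(10) inv(6) dg])
  have At: "A\<^sup>T \<in> carrier_mat n m" using A by simp
  have PD: "P' * D \<in> carrier_mat m n" using c Dc by simp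
  have "A\<^sup>T = (P' * D * Q')\<^sup>T" using inv(6) by simp
  also have "\<dots> = Q'\<^sup>T * (P' * D)\<^sup>T" by (rule transpose_mult[OF PD c(4)])
  also have "(P' * D)\<^sup>T = D\<^sup>T * P'\<^sup>T" by (rule transpose_mult[OF c(3) Dc])
  also have "Q'\<^sup>T * (D\<^sup>T * P'\<^sup>T) = Q'\<^sup>T * D\<^sup>T * P'\<^sup>T"
    by (rule assoc_mult_mat[symmetric], insert c Dc, auto)
  finally have At_eq: "A\<^sup>T = Q'\<^sup>T * D\<^sup>T * P'\<^sup>T" .
  have t1: "Q\<^sup>T * Q'\<^sup>T = 1\<^sub>m n" using transpose_mult[OF c(4) c(2)] inv(10) by simp
  have t2: "P'\<^sup>T * P\<^sup>T = 1\<^sub>m m" using transpose_mult[OF c(1) c(3)] inv(8) by simp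
  have ct: "Q\<^sup>T \<in> carrier_mat n n" "Q'\<^sup>T \<in> carrier_mat n n" "P\<^sup>T \<in> carrier_mat m m" "P'\<^sup>T \<in> carrier_mat m m"
    using c by auto
  interpret d2: decomp n m s "A\<^sup>T" "D\<^sup>T" "Q\<^sup>T" "P\<^sup>T" "Q'\<^sup>T" "P'\<^sup>T"
    by (rule decomp.intro[OF At ct(1) ct(2) ct(3) ct(4) t1 t2 At_eq diagp_transpose[OF dg]])
  have rt: "real_mat (A\<^sup>T) = (real_mat A)\<^sup>T" unfolding real_mat_def by (simp add: map_mat_transpose)
  have g12: "d2.good p \<longleftrightarrow> d1.good p" unfolding d1.good_def d2.good_def using Dc d1.sm by auto
  have h1: "P1 \<longleftrightarrow> d1.col_gen p" unfolding P1_def d1.col_gen_def using padic_gen_iff[OF A] .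
  have h2: "P2 \<longleftrightarrow> d2.col_gen p" unfolding P2_def d2.col_gen_def
    using padic_gen_iff[OF At, of p] by simp
  have h3: "P3 \<longleftrightarrow> d1.p3 p" unfolding P3_def d1.p3_def ..
  have h6: "P6 \<longleftrightarrow> d1.p6 p" unfolding P6_def d1.p6_def ..
  have pos: "\<forall>i<s. D$$(i,i) > 0" using dg unfolding diagp_def by auto
  have h4: "P4 \<longleftrightarrow> d1.good p" unfolding P4_def d1.good_def ed by auto
  have rs: "r = s" using rank_eqv[OF e dg] assms(2) by simp
  have gm: "Gcd (minors A r) = (\<Prod>i<s. D$$(i,i))" unfolding rs using gcd_minors_eqv[OF e] diag_minor_gcd[OF dg] by simp
  have h5: "P5 \<longleftrightarrow> d1.good p" unfolding P5_def gm d1.good_def using prod_pow_iff[OF p pos] .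
  have a1: "d1.col_gen p \<longleftrightarrow> d1.good p" using d1.colgen_good[OF p] d1.good_p6[OF p] d1.p6_colgen[OF p] by blast
  have a2: "d2.col_gen p \<longleftrightarrow> d1.good p" using d2.colgen_good[OF p] d2.good_p6[OF p] d2.p6_colgen[OF p] g12 by blast
  have a3: "d1.p3 p \<longleftrightarrow> d1.good p" using d1.p3_good[OF p] d1.good_p6[OF p] d1.p6_p3[OF p] by blast
  have a6: "d1.p6 p \<longleftrightarrow> d1.good p" using d1.good_p6[OF p] d1.p6_colgen[OF p] d1.colgen_good[OF p] by blast
  show ?thesis using h1 h2 h3 h4 h5 h6 a1 a2 a3 a6 by blast
qed


end
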